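(* Fix a $2\times 2$ unitary matrix $C_0=\begin{bmatrix} a & b\\ c & d\end{bmatrix}$ with $abcd\neq 0$. For an integer $M\ge 1$ and a frequency $\xi\in\mathbb{R}$, consider the quantum walk on $\mathbb{Z}$ with inflow described in the context, with stationary comfortability distribution $\mu_M$ on $\{0,1,\dots,M-1\}$, and let $X_M$ be a random variable with law $\mu_M$. Put $\omega=\arg(\det C_0)/2+\xi$ (the frequency $\xi$, hence $\omega$, may depend on $M$). Then, as $M\to\infty$, $X_M/M$ converges in distribution to the probability law on $\mathbb{R}$ with density $\rho^{(\omega)}(x)=\mathbf{1}_{[0,1]}(x)\,g(x)$, where: (i) if $\omega\in B_{out}$, then $g(x)=\delta(x)$, i.e. the limit law is the point mass at $0$; (ii) if $\omega\in\partial B$, or if $\omega\in B_{in}$ and $M\theta\to 0$, then $g(x)=3(1-x)^2$; (iii) if $\omega\in B_{in}$ and $M\theta\to\theta_*$ with $0<\theta_*<\infty$, then $g(x)=c(\theta_* )\sin^2[(1-x)\theta_*]$ with $c(\theta_* )=2\left(1-\frac{\sin 2\theta_*}{2\theta_*}\right)^{-1}$; (iv) if $\omega\in B_{in}$ and $M\theta\to\infty$, then $g(x)=1$ (uniform law on $[0,1]$).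
   Context: Notation: $|L\rangle=[1,0]^\top$, $|R\rangle=[0,1]^\top$. For $j\in\mathbb{Z}$ set $C(j)=C_0$ if $j\in\{0,\dots,M-1\}$ and $C(j)=I$ (identity) otherwise, and $P(j)=|L\rangle\langle L|C(j)$, $Q(j)=|R\rangle\langle R|C(j)$. The operator $U_M$ acts on uniformly bounded functions $\psi:\mathbb{Z}\to\mathbb{C}^2$ by $(U_M\psi)(j)=P(j+1)\psi(j+1)+Q(j-1)\psi(j-1)$. The initial state is $\psi_0(j)=e^{i\xi j}|R\rangle$ for $j\le 0$ and $\psi_0(j)=0$ for $j>0$, and $\psi_t=U_M^t\psi_0$. The state $e^{i\xi t}\psi_t$ converges pointwise to a stationary state as $t\to\infty$, and the distribution of the comfortability is $\mu_M(j)=\lim_{t\to\infty}\frac{\|\psi_t(j)\|^2}{\sum_{k=0}^{M-1}\|\psi_t(k)\|^2}$ for $j\in\{0,\dots,M-1\}$. The parameter regions are $B_{out}=\{\omega: |\cos\omega|>|a|\}$, $\partial B=\{\omega:|\cos\omega|=|a|\}$, $B_{in}=\{\omega:|\cos\omega|<|a|\}$. For $\omega\in B_{in}$, $\theta=\arccos\frac{\cos\omega}{|a|}$ if $\frac{\cos\omega}{|a|}>0$ and $\theta=\pi-\arccos\frac{\cos\omega}{|a|}$ otherwise (so $\theta>0$); in cases (ii)–(iv) with $\omega\in B_{in}$, $\omega$ and $\theta$ depend on $M$. In cases (i) and (ii) with $\omega\in\partial B$, $\omega$ is fixed. *)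

theory Defs
  imports "HOL-Probability.Probability"
begin

text \<open>States are functions int => complex x complex; the pair (x, y) stands for
  x |L> + y |R>. The coin is C0 = [[a, b], [c, d]].\<close>

definition unitary2 :: "complex \<Rightarrow> complex \<Rightarrow> complex \<Rightarrow> complex \<Rightarrow> bool" where
  "unitary2 a b c d \<longleftrightarrow>
     a * cnj a + b * cnj b = 1 \<and> c * cnj c + d * cnj d = 1 \<and> a * cnj c + b * cnj d = 0"

definition coin_apply ::
  "complex \<Rightarrow> complex \<Rightarrow> complex \<Rightarrow> complex \<Rightarrow> nat \<Rightarrow> int \<Rightarrow> complex \<times> complex \<Rightarrow> complex \<times> complex" where
  "coin_apply a b c d M j v =
     (if 0 \<le> j \<and> j < int M then (a * fst v + b * snd v, c * fst v + d * snd v) else v)"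

text \<open>(U_M psi)(j) = P(j+1) psi(j+1) + Q(j-1) psi(j-1), with P(j) = |L><L|C(j), Q(j) = |R><R|C(j).\<close>
definition walk_step ::
  "complex \<Rightarrow> complex \<Rightarrow> complex \<Rightarrow> complex \<Rightarrow> nat \<Rightarrow> (int \<Rightarrow> complex \<times> complex) \<Rightarrow> (int \<Rightarrow> complex \<times> complex)" where
  "walk_step a b c d M \<psi> j =
     (fst (coin_apply a b c d M (j + 1) (\<psi> (j + 1))), snd (coin_apply a b c d M (j - 1) (\<psi> (j - 1))))"

definition psi_init :: "real \<Rightarrow> int \<Rightarrow> complex \<times> complex" where
  "psi_init \<xi> j = (if j \<le> 0 then (0, exp (\<i> * complex_of_real (\<xi> * real_of_int j))) else (0, 0))"

definition psi :: "complex \<Rightarrow> complex \<Rightarrow> complex \<Rightarrow> complex \<Rightarrow> nat \<Rightarrow> real \<Rightarrow> nat \<Rightarrow> int \<Rightarrow> complex \<times> complex" where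
  "psi a b c d M \<xi> t = (walk_step a b c d M ^^ t) (psi_init \<xi>)"

definition normsq :: "complex \<times> complex \<Rightarrow> real" where
  "normsq v = (cmod (fst v))\<^sup>2 + (cmod (snd v))\<^sup>2"

definition comfort :: "complex \<Rightarrow> complex \<Rightarrow> complex \<Rightarrow> complex \<Rightarrow> nat \<Rightarrow> real \<Rightarrow> nat \<Rightarrow> real" where
  "comfort a b c d M \<xi> j =
     (if j < M then
        lim (\<lambda>t. normsq (psi a b c d M \<xi> t (int j)) /
                  (\<Sum>k<M. normsq (psi a b c d M \<xi> t (int k))))
      else 0)"

definition scaled_law :: "complex \<Rightarrow> complex \<Rightarrow> complex \<Rightarrow> complex \<Rightarrow> nat \<Rightarrow> real \<Rightarrow> real measure" where
  "scaled_law a b c d M \<xi> =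
     distr (density (count_space UNIV) (\<lambda>j. ennreal (comfort a b c d M \<xi> j))) borel
           (\<lambda>j. real j / real M)"

definition omega_of :: "complex \<Rightarrow> complex \<Rightarrow> complex \<Rightarrow> complex \<Rightarrow> real \<Rightarrow> real" where
  "omega_of a b c d \<xi> = Arg (a * d - b * c) / 2 + \<xi>"

definition theta_of :: "complex \<Rightarrow> real \<Rightarrow> real" where
  "theta_of a \<omega> = (if cos \<omega> / cmod a > 0 then arccos (cos \<omega> / cmod a)
                    else pi - arccos (cos \<omega> / cmod a))"

definition law_with_density :: "(real \<Rightarrow> real) \<Rightarrow> real measure" where
  "law_with_density g = density lborel (\<lambda>x. ennreal (indicator {0..1} x * g x))"

end

theory Submission
  imports Defs "HOL-Real_Asymp.Real_Asymp"
begin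

locale coin =
  fixes a b c d :: complex
  assumes unit: "unitary2 a b c d" and nz: "a * b * c * d \<noteq> 0"
begin

lemma a_nz: "a \<noteq> 0" and b_nz: "b \<noteq> 0" and c_nz: "c \<noteq> 0" and d_nz: "d \<noteq> 0"
  using nz by auto

lemma r1: "a * cnj a + b * cnj b = 1" and r2: "c * cnj c + d * cnj d = 1"
  and r3: "a * cnj c + b * cnj d = 0"
  using unit unfolding unitary2_def by auto

lemma r3c: "cnj a * c + cnj b * d = 0"
proof -
  have "cnj (a * cnj c + b * cnj d) = 0" using r3 by simp
  thus ?thesis by (simp add: mult.commute)
qed

definition "Dl = a * d - b * c"

lemma c_eq: "c = - Dl * cnj b"
proof -
  have "- Dl * cnj b - c = c * (a * cnj a + b * cnj b - 1) - a * (cnj a * c + cnj b * d)"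
    unfolding Dl_def by (simp add: algebra_simps)
  thus ?thesis using r1 r3c by simp
qed

lemma d_eq: "d = Dl * cnj a"
proof -
  have "Dl * cnj a - d = d * (a * cnj a + b * cnj b - 1) - b * (cnj a * c + cnj b * d)"
    unfolding Dl_def by (simp add: algebra_simps)
  thus ?thesis using r1 r3c by simp
qed

lemma cols: "Dl * cnj Dl = 1" "a * cnj a + c * cnj c = 1" "b * cnj b + d * cnj d = 1"
  "cnj a * b + cnj c * d = 0"
proof -
  obtain D where D: "D = Dl" by blast
  have hc: "c = - D * cnj b" using c_eq D by simp
  have hd: "d = D * cnj a" using d_eq D by simp
  have "c * cnj c + d * cnj d = D * cnj D * (a * cnj a + b * cnj b)"
    unfolding hc hd by (simp add: algebra_simps)
  thus u: "Dl * cnj Dl = 1" using r1 r2 D by simp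
  have "a * cnj a + c * cnj c = a * cnj a + D * cnj D * (b * cnj b)"
    unfolding hc by (simp add: algebra_simps)
  thus "a * cnj a + c * cnj c = 1" using u r1 D by simp
  have "b * cnj b + d * cnj d = b * cnj b + D * cnj D * (a * cnj a)"
    unfolding hd by (simp add: algebra_simps)
  thus "b * cnj b + d * cnj d = 1" using u r1 D by (simp add: algebra_simps)
  have "cnj a * b + cnj c * d = cnj a * b * (1 - D * cnj D)"
    unfolding hc hd by (simp add: algebra_simps)
  thus "cnj a * b + cnj c * d = 0" using u D by simp
qed

lemma Dl_unit: "Dl * cnj Dl = 1" and col1: "a * cnj a + c * cnj c = 1"
  and col2: "b * cnj b + d * cnj d = 1" and col3: "cnj a * b + cnj c * d = 0"
  using cols by auto

lemma col3c: "a * cnj b + c * cnj d = 0"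
proof -
  have "cnj (cnj a * b + cnj c * d) = 0" using col3 by simp
  thus ?thesis by (simp add: mult.commute)
qed

lemma norm_sq_pres:
  "(cmod (a * x + b * y))\<^sup>2 + (cmod (c * x + d * y))\<^sup>2 = (cmod x)\<^sup>2 + (cmod y)\<^sup>2"
proof -
  have ri: "\<And>a b c d x y A B C D X Y :: complex.
     (a*x+b*y)*(A*X+B*Y) + (c*x+d*y)*(C*X+D*Y) = x*X*(a*A+c*C) + y*Y*(b*B+d*D) + x*Y*(a*B+c*D) + X*y*(A*b+C*d)"
    by (simp add: algebra_simps)
  have "complex_of_real ((cmod (a * x + b * y))\<^sup>2 + (cmod (c * x + d * y))\<^sup>2)
     = (a * x + b * y) * (cnj a * cnj x + cnj b * cnj y) + (c * x + d * y) * (cnj c * cnj x + cnj d * cnj y)"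
    by (simp only: complex_norm_square of_real_add complex_cnj_add complex_cnj_mult)
  also have "\<dots> = x * cnj x * (a * cnj a + c * cnj c) + y * cnj y * (b * cnj b + d * cnj d)
       + x * cnj y * (a * cnj b + c * cnj d) + cnj x * y * (cnj a * b + cnj c * d)"
    by (rule ri)
  also have "\<dots> = complex_of_real ((cmod x)\<^sup>2 + (cmod y)\<^sup>2)"
    by (simp only: col1 col2 col3 col3c complex_norm_square of_real_add mult_1_right mult_zero_right add_0_right)
  finally show ?thesis using of_real_eq_iff by blast
qed

lemma abs_le1: "cmod a \<le> 1" "cmod b \<le> 1" "cmod c \<le> 1" "cmod d \<le> 1"
proof -
  have e1: "(cmod a)\<^sup>2 + (cmod b)\<^sup>2 = 1"
  proof -
    have "complex_of_real ((cmod a)\<^sup>2 + (cmod b)\<^sup>2) = 1"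
      by (simp only: of_real_add complex_norm_square r1)
    thus ?thesis using of_real_eq_1_iff by blast
  qed
  have e2: "(cmod c)\<^sup>2 + (cmod d)\<^sup>2 = 1"
  proof -
    have "complex_of_real ((cmod c)\<^sup>2 + (cmod d)\<^sup>2) = 1"
      by (simp only: of_real_add complex_norm_square r2)
    thus ?thesis using of_real_eq_1_iff by blast
  qed
  have sq: "x \<le> 1" if "x\<^sup>2 + y\<^sup>2 = 1" "0 \<le> x" for x y :: real
  proof -
    have "x\<^sup>2 \<le> 1" using that(1) zero_le_power2[of y] by linarith
    thus ?thesis using power2_le_imp_le[of x 1] by simp
  qed
  show "cmod a \<le> 1" using sq[OF e1] by simp
  show "cmod b \<le> 1" using sq[of "cmod b" "cmod a"] e1 by (simp add: add.commute)
  show "cmod c \<le> 1" using sq[OF e2] by simp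
  show "cmod d \<le> 1" using sq[of "cmod d" "cmod c"] e2 by (simp add: add.commute)
qed

end

lemma normP2: "(norm v)\<^sup>2 = (cmod (fst v))\<^sup>2 + (cmod (snd v))\<^sup>2"
  by (cases v) (simp add: norm_Pair)

context coin begin

definition PL :: "(nat \<Rightarrow> complex \<times> complex) \<Rightarrow> nat \<Rightarrow> complex" where
  "PL v j = a * fst (v j) + b * snd (v j)"
definition PR :: "(nat \<Rightarrow> complex \<times> complex) \<Rightarrow> nat \<Rightarrow> complex" where
  "PR v j = c * fst (v j) + d * snd (v j)"

definition Eop :: "nat \<Rightarrow> (nat \<Rightarrow> complex \<times> complex) \<Rightarrow> nat \<Rightarrow> complex \<times> complex" where
  "Eop M v j = ((if Suc j < M then PL v (Suc j) else 0), (if 0 < j then PR v (j - 1) else 0))"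

definition nrm :: "nat \<Rightarrow> (nat \<Rightarrow> complex \<times> complex) \<Rightarrow> real" where
  "nrm M v = (\<Sum>j<M. (norm (v j))\<^sup>2)"

definition leak :: "nat \<Rightarrow> (nat \<Rightarrow> complex \<times> complex) \<Rightarrow> real" where
  "leak M v = (cmod (PL v 0))\<^sup>2 + (cmod (PR v (M - 1)))\<^sup>2"

lemma PLR_norm: "(cmod (PL v j))\<^sup>2 + (cmod (PR v j))\<^sup>2 = (norm (v j))\<^sup>2"
  unfolding PL_def PR_def normP2 by (rule norm_sq_pres)

lemma energy:
  assumes "0 < M"
  shows "nrm M (Eop M v) + leak M v = nrm M v"
proof -
  obtain m where m: "M = Suc m" using assms by (cases M) auto
  define p where "p j = (cmod (PL v j))\<^sup>2" for j
  define q where "q j = (cmod (PR v j))\<^sup>2" for j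
  have e: "(norm (Eop M v j))\<^sup>2 = (if Suc j < M then p (Suc j) else 0) + (if 0 < j then q (j - 1) else 0)" for j
    unfolding Eop_def normP2 p_def q_def by simp
  have s1: "(\<Sum>j<M. (if Suc j < M then p (Suc j) else 0)) = (\<Sum>j<M. p j) - p 0"
  proof -
    have "(\<Sum>j<Suc m. (if Suc j < Suc m then p (Suc j) else 0)) = (\<Sum>j<m. (if Suc j < Suc m then p (Suc j) else 0))"
      by (simp add: sum.lessThan_Suc)
    also have "\<dots> = (\<Sum>j<m. p (Suc j))" by (rule sum.cong) auto
    finally show ?thesis unfolding m sum.lessThan_Suc_shift by simp
  qed
  have s2: "(\<Sum>j<M. (if 0 < j then q (j - 1) else 0)) = (\<Sum>j<M. q j) - q m"
  proof -
    have "(\<Sum>j<Suc m. (if 0 < j then q (j - 1) else 0)) = (\<Sum>j<m. q j)"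
      by (simp only: sum.lessThan_Suc_shift) simp
    then show ?thesis unfolding m by (simp add: sum.lessThan_Suc)
  qed
  have "nrm M (Eop M v) = (\<Sum>j<M. p j) - p 0 + ((\<Sum>j<M. q j) - q m)"
    unfolding nrm_def e sum.distrib s1 s2 by simp
  moreover have "nrm M v = (\<Sum>j<M. p j) + (\<Sum>j<M. q j)"
    unfolding nrm_def sum.distrib[symmetric] p_def q_def PLR_norm ..
  ultimately show ?thesis unfolding leak_def p_def q_def m by simp
qed

lemma nrm_nonneg: "0 \<le> nrm M v"
  unfolding nrm_def by (auto intro: sum_nonneg)

lemma leak_nonneg: "0 \<le> leak M v"
  unfolding leak_def by simp

lemma energy_iter:
  assumes "0 < M"
  shows "nrm M ((Eop M ^^ n) v) + (\<Sum>t<n. leak M ((Eop M ^^ t) v)) = nrm M v"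
proof (induction n)
  case 0 then show ?case by simp
next
  case (Suc n)
  have "nrm M ((Eop M ^^ Suc n) v) + leak M ((Eop M ^^ n) v) = nrm M ((Eop M ^^ n) v)"
    using energy[OF assms] by simp
  with Suc show ?case by simp
qed

lemma nrm_decr:
  assumes "0 < M" "m \<le> n"
  shows "nrm M ((Eop M ^^ n) v) \<le> nrm M ((Eop M ^^ m) v)"
proof -
  have "(Eop M ^^ n) v = (Eop M ^^ (n - m)) ((Eop M ^^ m) v)"
    using assms(2) by (metis funpow_add le_add_diff_inverse2 o_apply)
  moreover have "nrm M ((Eop M ^^ k) w) \<le> nrm M w" for k w
    using energy_iter[OF assms(1), of k w] sum_nonneg[of "{..<k}" "\<lambda>t. leak M ((Eop M ^^ t) w)"]
      leak_nonneg by simp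
  ultimately show ?thesis by simp
qed

lemma step_PL:
  assumes "j < M"
  shows "PL ((Eop M ^^ Suc t) v) j = a * (if Suc j < M then PL ((Eop M ^^ t) v) (Suc j) else 0)
          + b * (if 0 < j then PR ((Eop M ^^ t) v) (j - 1) else 0)"
  by (simp add: PL_def Eop_def)

lemma step_PR:
  assumes "j < M"
  shows "PR ((Eop M ^^ Suc t) v) j = c * (if Suc j < M then PL ((Eop M ^^ t) v) (Suc j) else 0)
          + d * (if 0 < j then PR ((Eop M ^^ t) v) (j - 1) else 0)"
  by (simp add: PR_def Eop_def)

lemma triangle:
  fixes v M \<sigma>
  defines "K \<equiv> 3 / cmod a"
  assumes M: "0 < M" and \<sigma>: "0 \<le> \<sigma>"
    and h0: "\<And>t. t < 2 * M \<Longrightarrow> cmod (PL ((Eop M ^^ t) v) 0) \<le> \<sigma>"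
  shows "j < M \<Longrightarrow> (\<forall>t. j \<le> t \<and> t + j < 2 * M \<longrightarrow>
            cmod (PL ((Eop M ^^ t) v) j) \<le> K ^ j * \<sigma> \<and>
            (0 < j \<longrightarrow> cmod (PR ((Eop M ^^ t) v) (j - 1)) \<le> K ^ j * \<sigma>))"
proof (induction j)
  case 0
  then show ?case using h0 by simp
next
  case (Suc j)
  let ?P = "\<lambda>t j. PL ((Eop M ^^ t) v) j"
  let ?Q = "\<lambda>t j. PR ((Eop M ^^ t) v) j"
  define B where "B = K ^ j * \<sigma>"
  have ra: "0 < cmod a" "cmod a \<le> 1" using a_nz abs_le1 by auto
  have K: "K = 3 / cmod a" "1 \<le> K" using ra unfolding K_def by auto
  have B0: "0 \<le> B" unfolding B_def using K \<sigma> by simp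
  have IH: "\<And>t. j \<le> t \<Longrightarrow> t + j < 2 * M \<Longrightarrow> cmod (?P t j) \<le> B \<and>
       (0 < j \<longrightarrow> cmod (?Q t (j - 1)) \<le> B)"
    using Suc by (simp add: B_def)
  define Q' where "Q' t = (if 0 < j then ?Q t (j - 1) else 0)" for t
  have Q'b: "cmod (Q' t) \<le> B" if "j \<le> t" "t + j < 2 * M" for t
    using IH[OF that] B0 unfolding Q'_def by auto
  have KB: "K ^ Suc j * \<sigma> = K * B" unfolding B_def by simp
  have Pb: "cmod (?P t (Suc j)) \<le> 2 * B / cmod a" if "j \<le> t" "t + Suc j < 2 * M" for t
  proof -
    have "?P (Suc t) j = a * ?P t (Suc j) + b * Q' t"
      using step_PL[of j M t v] Suc.prems unfolding Q'_def by simp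
    hence "a * ?P t (Suc j) = ?P (Suc t) j - b * Q' t" by simp
    hence "cmod a * cmod (?P t (Suc j)) \<le> cmod (?P (Suc t) j) + cmod b * cmod (Q' t)"
      by (metis norm_mult norm_triangle_ineq4)
    also have "\<dots> \<le> B + 1 * B"
      using IH[of "Suc t"] that Q'b[of t] abs_le1(2) B0
      by (intro add_mono mult_mono) auto
    finally show ?thesis using ra by (simp add: field_simps)
  qed
  show ?case
  proof (intro allI impI conjI)
    fix t assume t: "Suc j \<le> t \<and> t + Suc j < 2 * M"
    have "cmod (?P t (Suc j)) \<le> 2 * B / cmod a" using Pb t by auto
    also have "\<dots> \<le> K * B" unfolding K(1) using B0 ra by (simp add: divide_right_mono)
    finally show "cmod (?P t (Suc j)) \<le> K ^ Suc j * \<sigma>" unfolding KB .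
    obtain s where s: "t = Suc s" using t by (cases t) auto
    have "?Q t j = c * ?P s (Suc j) + d * Q' s"
      using step_PR[of j M s v] Suc.prems unfolding Q'_def s by simp
    hence "cmod (?Q t j) \<le> cmod c * cmod (?P s (Suc j)) + cmod d * cmod (Q' s)"
      by (metis norm_mult norm_triangle_ineq)
    also have "\<dots> \<le> 1 * (2 * B / cmod a) + 1 * (B / cmod a)"
    proof (intro add_mono mult_mono)
      show "cmod (?P s (Suc j)) \<le> 2 * B / cmod a" using Pb[of s] t s by auto
      have "cmod (Q' s) \<le> B" using Q'b[of s] t s by auto
      also have "B \<le> B / cmod a" using B0 ra by (simp add: field_simps mult_left_le)
      finally show "cmod (Q' s) \<le> B / cmod a" .
    qed (use abs_le1 B0 ra in auto)
    also have "\<dots> = K * B" unfolding K(1) by (simp add: field_simps)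
    finally show "cmod (?Q t (Suc j - 1)) \<le> K ^ Suc j * \<sigma>" unfolding KB by simp
  qed
qed

end

context coin begin

lemma contraction:
  assumes M: "0 < M"
  shows "\<exists>q. 0 \<le> q \<and> q < 1 \<and> (\<forall>v. nrm M ((Eop M ^^ (2 * M)) v) \<le> q * nrm M v)"
proof -
  define K where "K = 3 / cmod a"
  have ra: "0 < cmod a" "cmod a \<le> 1" using a_nz abs_le1 by auto
  have K1: "1 \<le> K" using ra unfolding K_def by auto
  define C where "C = real M * 2 * (K ^ M)\<^sup>2"
  have C0: "0 \<le> C" unfolding C_def by simp
  obtain m where m: "M = Suc m" using M by (cases M) auto
  have main: "nrm M ((Eop M ^^ (2 * M)) v) \<le> C / (1 + C) * nrm M v" for v
  proof -
    let ?v = "\<lambda>t. (Eop M ^^ t) v"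
    define S where "S = (\<Sum>t<2 * M. leak M (?v t))"
    define \<sigma> where "\<sigma> = sqrt S"
    have S0: "0 \<le> S" unfolding S_def by (auto intro: sum_nonneg leak_nonneg)
    have \<sigma>0: "0 \<le> \<sigma>" unfolding \<sigma>_def using S0 by simp
    have h0: "cmod (PL (?v t) 0) \<le> \<sigma>" if "t < 2 * M" for t
    proof -
      have "(cmod (PL (?v t) 0))\<^sup>2 \<le> leak M (?v t)" unfolding leak_def by simp
      also have "\<dots> \<le> S" unfolding S_def using that
        by (intro member_le_sum) (auto intro: leak_nonneg)
      finally show ?thesis unfolding \<sigma>_def by (simp add: real_le_rsqrt)
    qed
    have tri: "\<forall>t. j \<le> t \<and> t + j < 2 * M \<longrightarrow>
            cmod (PL (?v t) j) \<le> K ^ j * \<sigma> \<and>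
            (0 < j \<longrightarrow> cmod (PR (?v t) (j - 1)) \<le> K ^ j * \<sigma>)" if "j < M" for j
      unfolding K_def by (rule triangle[of M \<sigma> v j]) (use M \<sigma>0 h0 that in auto)
    have KM: "K ^ i * \<sigma> \<le> K ^ M * \<sigma>" if "i \<le> M" for i
      using that K1 \<sigma>0 by (intro mult_right_mono power_increasing) auto
    have pt: "(norm (?v M j))\<^sup>2 \<le> 2 * (K ^ M * \<sigma>)\<^sup>2" if j: "j < M" for j
    proof -
      have vM: "?v M j = Eop M (?v m) j" unfolding m by simp
      have f: "cmod (fst (?v M j)) \<le> K ^ M * \<sigma>"
      proof (cases "Suc j < M")
        case True
        have "cmod (PL (?v m) (Suc j)) \<le> K ^ Suc j * \<sigma>" using tri[OF True] True m by auto
        then show ?thesis using vM True KM[of "Suc j"] by (simp add: Eop_def)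
      next
        case False
        then show ?thesis using vM K1 \<sigma>0 by (simp add: Eop_def)
      qed
      have s: "cmod (snd (?v M j)) \<le> K ^ M * \<sigma>"
      proof (cases "0 < j")
        case True
        have "cmod (PR (?v m) (j - 1)) \<le> K ^ j * \<sigma>" using tri[OF j] True j m by auto
        then show ?thesis using vM True KM[of j] j by (simp add: Eop_def)
      next
        case False
        then show ?thesis using vM K1 \<sigma>0 by (simp add: Eop_def)
      qed
      have "(cmod (fst (?v M j)))\<^sup>2 \<le> (K ^ M * \<sigma>)\<^sup>2" using f by (intro power_mono) auto
      moreover have "(cmod (snd (?v M j)))\<^sup>2 \<le> (K ^ M * \<sigma>)\<^sup>2" using s by (intro power_mono) auto
      ultimately show ?thesis unfolding normP2 by simp
    qed
    have "nrm M (?v M) \<le> (\<Sum>j<M. 2 * (K ^ M * \<sigma>)\<^sup>2)"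
      unfolding nrm_def using pt by (intro sum_mono) auto
    also have "\<dots> = C * S" unfolding C_def \<sigma>_def using S0 by (simp add: power_mult_distrib)
    finally have X1: "nrm M (?v M) \<le> C * S" .
    have X2: "nrm M (?v (2 * M)) \<le> nrm M (?v M)" using nrm_decr[OF M] by simp
    have X3: "S = nrm M v - nrm M (?v (2 * M))" using energy_iter[OF M, of "2 * M" v] unfolding S_def by simp
    have "nrm M (?v (2 * M)) * (1 + C) \<le> C * nrm M v" using X1 X2 X3 by (simp add: algebra_simps)
    thus ?thesis using C0 by (simp add: field_simps)
  qed
  show ?thesis
    by (rule exI[of _ "C / (1 + C)"]) (use C0 main in auto)
qed

lemma decay_nrm:
  assumes M: "0 < M"
  shows "(\<lambda>t. nrm M ((Eop M ^^ t) v)) \<longlonglongrightarrow> 0"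
proof -
  obtain q where q: "0 \<le> q" "q < 1" "\<And>v. nrm M ((Eop M ^^ (2 * M)) v) \<le> q * nrm M v"
    using contraction[OF M] by blast
  define T where "T = 2 * M"
  have T: "0 < T" using M unfolding T_def by simp
  have pw: "nrm M ((Eop M ^^ (n * T)) v) \<le> q ^ n * nrm M v" for n
  proof (induction n)
    case 0 then show ?case by simp
  next
    case (Suc n)
    have "(Eop M ^^ (Suc n * T)) v = (Eop M ^^ (2 * M)) ((Eop M ^^ (n * T)) v)"
      unfolding T_def by (simp add: funpow_add)
    hence "nrm M ((Eop M ^^ (Suc n * T)) v) \<le> q * nrm M ((Eop M ^^ (n * T)) v)"
      using q(3) by simp
    also have "\<dots> \<le> q * (q ^ n * nrm M v)" using Suc q(1) by (rule mult_left_mono)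
    finally show ?case by simp
  qed
  have bnd: "nrm M ((Eop M ^^ t) v) \<le> q ^ (t div T) * nrm M v" for t
  proof -
    have "(t div T) * T \<le> t" by simp
    hence "nrm M ((Eop M ^^ t) v) \<le> nrm M ((Eop M ^^ ((t div T) * T)) v)"
      by (rule nrm_decr[OF M])
    also have "\<dots> \<le> q ^ (t div T) * nrm M v" by (rule pw)
    finally show ?thesis .
  qed
  have fl: "filterlim (\<lambda>t. t div T) at_top sequentially"
    unfolding filterlim_at_top eventually_sequentially
  proof
    fix Z show "\<exists>N. \<forall>t\<ge>N. Z \<le> t div T"
    proof (rule exI[of _ "Z * T"], intro allI impI)
      fix t assume "Z * T \<le> t"
      from div_le_mono[OF this, of T] show "Z \<le> t div T" using T by simp
    qed
  qed
  have "(\<lambda>t. q ^ (t div T)) \<longlonglongrightarrow> 0"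
    using filterlim_compose[OF LIMSEQ_power_zero[of q] fl] q by simp
  hence "(\<lambda>t. q ^ (t div T) * nrm M v) \<longlonglongrightarrow> 0 * nrm M v"
    by (intro tendsto_mult tendsto_const)
  hence lim: "(\<lambda>t. q ^ (t div T) * nrm M v) \<longlonglongrightarrow> 0" by simp
  show ?thesis
    by (rule tendsto_sandwich[OF _ _ tendsto_const lim]) (auto intro!: always_eventually nrm_nonneg bnd)
qed

lemma decay:
  assumes M: "0 < M" and j: "j < M"
  shows "(\<lambda>t. (Eop M ^^ t) v j) \<longlonglongrightarrow> 0"
proof -
  have le: "norm ((Eop M ^^ t) v j) \<le> sqrt (nrm M ((Eop M ^^ t) v))" for t
  proof -
    have "(norm ((Eop M ^^ t) v j))\<^sup>2 \<le> nrm M ((Eop M ^^ t) v)"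
      unfolding nrm_def using j by (intro member_le_sum) auto
    thus ?thesis by (simp add: real_le_rsqrt)
  qed
  have "(\<lambda>t. sqrt (nrm M ((Eop M ^^ t) v))) \<longlonglongrightarrow> sqrt 0"
    by (intro tendsto_real_sqrt decay_nrm[OF M])
  hence lim2: "(\<lambda>t. sqrt (nrm M ((Eop M ^^ t) v))) \<longlonglongrightarrow> 0" by simp
  have "(\<lambda>t. norm ((Eop M ^^ t) v j)) \<longlonglongrightarrow> 0"
    by (rule tendsto_sandwich[OF _ _ tendsto_const lim2]) (auto intro!: always_eventually le)
  thus ?thesis by (simp add: tendsto_norm_zero_iff)
qed

end

fun Aseq :: "real \<Rightarrow> nat \<Rightarrow> real" where
  "Aseq \<kappa> 0 = 0"
| "Aseq \<kappa> (Suc 0) = 1"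
| "Aseq \<kappa> (Suc (Suc k)) = 2 * \<kappa> * Aseq \<kappa> (Suc k) - Aseq \<kappa> k"

lemma E1_alg:
  fixes a b z lam h S s A0 A1 :: complex and \<rho> :: real
  assumes "a \<noteq> 0" "h \<noteq> 0" "\<rho> \<noteq> 0" "lam = h * z" "s = a / (of_real \<rho> * h)"
  shows "lam * (S * s * A1 * b / a) = a * (S * A0 * b / a) + b * (S * (A1 * z / of_real \<rho> - A0))"
proof -
  have "lam * s = a * z / of_real \<rho>" using assms by (simp add: field_simps)
  hence "lam * (S * s * A1 * b / a) = (a * z / of_real \<rho>) * (S * A1 * b / a)"
    by (simp add: algebra_simps)
  also have "\<dots> = b * S * A1 * z / of_real \<rho>" using assms(1) by (simp add: field_simps)
  also have "\<dots> = a * (S * A0 * b / a) + b * (S * (A1 * z / of_real \<rho> - A0))"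
    using assms(1,3) by (simp add: field_simps)
  finally show ?thesis .
qed

lemma E2_alg:
  fixes a b c d z cz lam h S s A0 A1 A2 :: complex and \<rho> \<kappa> :: real
  assumes "a \<noteq> 0" "h \<noteq> 0" "\<rho> \<noteq> 0" "lam = h * z" "lam * cz = h"
    "z + cz = 2 * of_real \<rho> * of_real \<kappa>" "c = - (h * h) * cnj b" "d = h * h * cnj a"
    "a * cnj a = of_real \<rho> * of_real \<rho>" "b * cnj b + a * cnj a = 1"
    "s = a / (of_real \<rho> * h)" "A2 = 2 * of_real \<kappa> * A1 - A0"
  shows "lam * (S * (A1 * z / of_real \<rho> - A0)) =
         c * (S * s * A1 * b / a) + d * (S * s * (A2 * z / of_real \<rho> - A1))"
proof -
  have ca: "cnj a = of_real \<rho> * of_real \<rho> / a" using assms(1,9) by (simp add: field_simps)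
  have "c * (s * A1 * b / a) + d * (s * (A2 * z / of_real \<rho> - A1))
      = (h * h) * s * (cnj a * A2 * z / of_real \<rho> - A1 * (b * cnj b + a * cnj a) / a)"
    unfolding assms(7,8) using assms(1) by (simp add: field_simps)
  also have "\<dots> = (h * h) * s * (cnj a * A2 * z / of_real \<rho> - A1 / a)"
    using assms(10) by simp
  also have "\<dots> = h * z * A2 - h * A1 / of_real \<rho>"
    unfolding assms(11) ca using assms(1,2,3) by (simp add: field_simps)
  also have "\<dots> = lam * A2 - h * A1 / of_real \<rho>" using assms(4) by simp
  also have "\<dots> = lam * (A1 * z / of_real \<rho> - A0)"
  proof -
    have "lam * (A2 + A0) = lam * A1 * (z + cz) / of_real \<rho>"
      unfolding assms(12) assms(6) using assms(3) by (simp add: field_simps)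
    also have "\<dots> = A1 * (lam * z + h) / of_real \<rho>" using assms(5) by (simp add: algebra_simps)
    finally have "lam * (A2 + A0) = A1 * (lam * z + h) / of_real \<rho>" .
    thus ?thesis using assms(3) by (simp add: field_simps)
  qed
  finally have "c * (s * A1 * b / a) + d * (s * (A2 * z / of_real \<rho> - A1)) = lam * (A1 * z / of_real \<rho> - A0)" .
  hence "S * (c * (s * A1 * b / a) + d * (s * (A2 * z / of_real \<rho> - A1))) = S * (lam * (A1 * z / of_real \<rho> - A0))"
    by simp
  thus ?thesis by (simp add: algebra_simps)
qed

definition sc :: "complex \<Rightarrow> complex \<times> complex \<Rightarrow> complex \<times> complex" where
  "sc \<mu> v = (\<mu> * fst v, \<mu> * snd v)"

lemma norm_sc: "norm (sc \<mu> v) = cmod \<mu> * norm v"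
proof -
  have "(norm (sc \<mu> v))\<^sup>2 = (cmod \<mu>)\<^sup>2 * ((cmod (fst v))\<^sup>2 + (cmod (snd v))\<^sup>2)"
    unfolding normP2 sc_def by (simp add: norm_mult power_mult_distrib algebra_simps)
  also have "\<dots> = (cmod \<mu> * norm v)\<^sup>2" by (simp only: normP2 power_mult_distrib)
  finally show ?thesis by (simp add: power2_eq_iff_nonneg)
qed

lemma psi_Suc: "psi a b c d M \<xi> (Suc t) = walk_step a b c d M (psi a b c d M \<xi> t)"
  by (simp add: psi_def)

lemma psi_B1: "int M \<le> j \<Longrightarrow> fst (psi a b c d M \<xi> t j) = 0"
proof (induction t arbitrary: j)
  case 0 then show ?case by (simp add: psi_def psi_init_def)
next
  case (Suc t)
  then show ?case by (simp add: psi_Suc walk_step_def coin_apply_def)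
qed

lemma psi_B2: "j \<le> 0 \<Longrightarrow> snd (psi a b c d M \<xi> t j) = exp (\<i> * of_real (\<xi> * (of_int j - of_nat t)))"
proof (induction t arbitrary: j)
  case 0 then show ?case by (simp add: psi_def psi_init_def)
next
  case (Suc t)
  have "snd (psi a b c d M \<xi> (Suc t) j) = snd (psi a b c d M \<xi> t (j - 1))"
    using Suc.prems by (simp add: psi_Suc walk_step_def coin_apply_def)
  also have "\<dots> = exp (\<i> * of_real (\<xi> * (of_int (j - 1) - of_nat t)))"
    using Suc by simp
  also have "\<xi> * (of_int (j - 1) - of_nat t) = \<xi> * (of_int j - of_nat (Suc t))"
    by simp
  finally show ?case .
qed

lemma psi_left: "snd (psi a b c d M \<xi> t (-1)) = cis (-\<xi>) ^ Suc t"
proof -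
  have "snd (psi a b c d M \<xi> t (-1)) = exp (\<i> * of_real (\<xi> * (- 1 - of_nat t)))"
    using psi_B2[of "-1"] by simp
  also have "\<xi> * (- 1 - of_nat t) = real (Suc t) * (-\<xi>)" by (simp add: algebra_simps)
  also have "exp (\<i> * of_real (real (Suc t) * (-\<xi>))) = cis (-\<xi>) ^ Suc t"
    by (simp only: cis_conv_exp[symmetric] Complex.DeMoivre)
  finally show ?thesis .
qed

context coin begin

lemma Eop_fst: "fst (Eop M v j) = (if Suc j < M then a * fst (v (Suc j)) + b * snd (v (Suc j)) else 0)"
  by (simp add: Eop_def PL_def)
lemma Eop_snd: "snd (Eop M v j) = (if 0 < j then c * fst (v (j - 1)) + d * snd (v (j - 1)) else 0)"
  by (simp add: Eop_def PR_def)

lemma psi_decomp: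
  fixes \<Phi> :: "nat \<Rightarrow> complex \<times> complex" and \<xi> :: real
  defines "lam \<equiv> cis (- \<xi>)"
  assumes S1: "\<And>j. Suc j < M \<Longrightarrow> a * fst (\<Phi> (Suc j)) + b * snd (\<Phi> (Suc j)) = lam * fst (\<Phi> j)"
    and S2: "0 < M \<Longrightarrow> fst (\<Phi> (M - 1)) = 0"
    and S3: "\<And>j. 0 < j \<Longrightarrow> j < M \<Longrightarrow> c * fst (\<Phi> (j - 1)) + d * snd (\<Phi> (j - 1)) = lam * snd (\<Phi> j)"
    and S4: "snd (\<Phi> 0) = 1"
  defines "e0 \<equiv> (\<lambda>j. psi_init \<xi> (int j) - \<Phi> j)"
  shows "j < M \<Longrightarrow> psi a b c d M \<xi> t (int j) = sc (lam ^ t) (\<Phi> j) + (Eop M ^^ t) e0 j"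
proof (induction t arbitrary: j)
  case 0 then show ?case by (simp add: e0_def sc_def psi_def)
next
  case (Suc t)
  let ?D = "(Eop M ^^ t) e0"
  have fstp: "fst (psi a b c d M \<xi> (Suc t) (int j)) = lam ^ Suc t * fst (\<Phi> j) + fst (Eop M ?D j)"
  proof (cases "Suc j < M")
    case True
    have "fst (psi a b c d M \<xi> (Suc t) (int j))
        = a * fst (psi a b c d M \<xi> t (int (Suc j))) + b * snd (psi a b c d M \<xi> t (int (Suc j)))"
    proof -
      have e: "int j + 1 = int (Suc j)" by simp
      show ?thesis unfolding psi_Suc walk_step_def e using True by (simp add: coin_apply_def)
    qed
    also have "\<dots> = lam ^ t * (a * fst (\<Phi> (Suc j)) + b * snd (\<Phi> (Suc j)))
                   + (a * fst (?D (Suc j)) + b * snd (?D (Suc j)))"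
      using Suc.IH[OF True] by (simp add: sc_def algebra_simps)
    also have "\<dots> = lam ^ Suc t * fst (\<Phi> j) + fst (Eop M ?D j)"
      using S1[OF True] True by (simp add: Eop_fst)
    finally show ?thesis .
  next
    case False
    hence jM: "j = M - 1" "int j + 1 = int M" using Suc.prems by auto
    have "fst (psi a b c d M \<xi> (Suc t) (int j)) = fst (psi a b c d M \<xi> t (int M))"
      unfolding psi_Suc walk_step_def jM(2) by (simp add: coin_apply_def)
    also have "\<dots> = 0" by (rule psi_B1) simp
    finally show ?thesis using S2 jM False Suc.prems by (simp add: Eop_fst)
  qed
  have sndp: "snd (psi a b c d M \<xi> (Suc t) (int j)) = lam ^ Suc t * snd (\<Phi> j) + snd (Eop M ?D j)"
  proof (cases "0 < j")
    case True
    have jm: "int j - 1 = int (j - 1)" using True by simp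
    have "snd (psi a b c d M \<xi> (Suc t) (int j))
        = c * fst (psi a b c d M \<xi> t (int (j - 1))) + d * snd (psi a b c d M \<xi> t (int (j - 1)))"
      unfolding psi_Suc walk_step_def jm using True Suc.prems by (simp add: coin_apply_def)
    also have "\<dots> = lam ^ t * (c * fst (\<Phi> (j - 1)) + d * snd (\<Phi> (j - 1)))
                   + (c * fst (?D (j - 1)) + d * snd (?D (j - 1)))"
      using Suc.IH[of "j - 1"] Suc.prems by (simp add: sc_def algebra_simps)
    also have "\<dots> = lam ^ Suc t * snd (\<Phi> j) + snd (Eop M ?D j)"
      using S3[OF True Suc.prems] True by (simp add: Eop_snd)
    finally show ?thesis .
  next
    case False
    hence j0: "j = 0" by simp
    have "snd (psi a b c d M \<xi> (Suc t) (int j)) = snd (psi a b c d M \<xi> t (-1))"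
      unfolding psi_Suc walk_step_def j0 by (simp add: coin_apply_def)
    also have "\<dots> = lam ^ Suc t" unfolding lam_def by (rule psi_left)
    finally show ?thesis using S4 j0 by (simp add: Eop_snd)
  qed
  show ?case using fstp sndp by (simp add: sc_def prod_eq_iff)
qed

end

lemma normsq_norm: "normsq v = (norm v)\<^sup>2"
  unfolding normsq_def normP2 ..

context coin begin

lemma comfort_eq:
  fixes \<Phi> :: "nat \<Rightarrow> complex \<times> complex" and \<xi> :: real
  assumes M: "0 < M"
  assumes S1: "\<And>j. Suc j < M \<Longrightarrow> a * fst (\<Phi> (Suc j)) + b * snd (\<Phi> (Suc j)) = cis (- \<xi>) * fst (\<Phi> j)"
    and S2: "fst (\<Phi> (M - 1)) = 0"
    and S3: "\<And>j. 0 < j \<Longrightarrow> j < M \<Longrightarrow> c * fst (\<Phi> (j - 1)) + d * snd (\<Phi> (j - 1)) = cis (- \<xi>) * snd (\<Phi> j)"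
    and S4: "snd (\<Phi> 0) = 1"
    and j: "j < M"
  shows "comfort a b c d M \<xi> j = (norm (\<Phi> j))\<^sup>2 / (\<Sum>k<M. (norm (\<Phi> k))\<^sup>2)"
proof -
  define e0 where "e0 = (\<lambda>j. psi_init \<xi> (int j) - \<Phi> j)"
  let ?lam = "cis (- \<xi>)"
  have dec: "psi a b c d M \<xi> t (int i) = sc (?lam ^ t) (\<Phi> i) + (Eop M ^^ t) e0 i" if "i < M" for i t
    unfolding e0_def by (rule psi_decomp[OF S1 _ S3 S4 that]) (use S2 in auto)
  have lim1: "(\<lambda>t. norm (psi a b c d M \<xi> t (int i))) \<longlonglongrightarrow> norm (\<Phi> i)" if i: "i < M" for i
  proof -
    have D: "(\<lambda>t. norm ((Eop M ^^ t) e0 i)) \<longlonglongrightarrow> 0"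
      using decay[OF M i, of e0] by (simp add: tendsto_norm_zero_iff)
    have bnd: "norm (norm (psi a b c d M \<xi> t (int i)) - norm (\<Phi> i)) \<le> norm ((Eop M ^^ t) e0 i)" for t
    proof -
      have n1: "norm (sc (?lam ^ t) (\<Phi> i)) = norm (\<Phi> i)" by (simp add: norm_sc norm_power)
      have "\<bar>norm (sc (?lam ^ t) (\<Phi> i) + (Eop M ^^ t) e0 i) - norm (sc (?lam ^ t) (\<Phi> i))\<bar>
            \<le> norm ((Eop M ^^ t) e0 i)"
        by (metis add_diff_cancel_left' norm_triangle_ineq3)
      thus ?thesis using dec[OF i, of t] n1 by simp
    qed
    have "(\<lambda>t. norm (psi a b c d M \<xi> t (int i)) - norm (\<Phi> i)) \<longlonglongrightarrow> 0"
      by (rule Lim_null_comparison[OF always_eventually D]) (use bnd in auto)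
    thus ?thesis by (rule LIM_zero_cancel)
  qed
  have lim2: "(\<lambda>t. normsq (psi a b c d M \<xi> t (int i))) \<longlonglongrightarrow> (norm (\<Phi> i))\<^sup>2" if "i < M" for i
    unfolding normsq_norm by (intro tendsto_power lim1 that)
  have den: "(\<Sum>k<M. (norm (\<Phi> k))\<^sup>2) \<noteq> 0"
  proof -
    have "(norm (\<Phi> 0))\<^sup>2 \<le> (\<Sum>k<M. (norm (\<Phi> k))\<^sup>2)" using M by (intro member_le_sum) auto
    moreover have "(norm (\<Phi> 0))\<^sup>2 = (cmod (fst (\<Phi> 0)))\<^sup>2 + 1" using S4 by (simp add: normP2)
    ultimately show ?thesis by (smt (verit) zero_le_power2)
  qed
  have "(\<lambda>t. normsq (psi a b c d M \<xi> t (int j)) / (\<Sum>k<M. normsq (psi a b c d M \<xi> t (int k))))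
        \<longlonglongrightarrow> (norm (\<Phi> j))\<^sup>2 / (\<Sum>k<M. (norm (\<Phi> k))\<^sup>2)"
    by (intro tendsto_divide lim2 j tendsto_sum den) auto
  thus ?thesis unfolding comfort_def using j by (simp add: limI)
qed

end

definition gfun :: "real \<Rightarrow> real \<Rightarrow> nat \<Rightarrow> real" where
  "gfun \<kappa> \<epsilon> k = (Aseq \<kappa> k)\<^sup>2 + (Aseq \<kappa> (k - 1))\<^sup>2 - 2 * \<epsilon> * \<kappa> * Aseq \<kappa> k * Aseq \<kappa> (k - 1)"

lemma cmod_cis_comb:
  "(cmod (of_real \<alpha> * cis y - of_real \<beta>))\<^sup>2 = \<alpha>\<^sup>2 - 2 * \<alpha> * \<beta> * cos y + \<beta>\<^sup>2"
proof -
  have "(cmod (of_real \<alpha> * cis y - of_real \<beta>))\<^sup>2 = (\<alpha> * cos y - \<beta>)\<^sup>2 + (\<alpha> * sin y)\<^sup>2"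
    by (simp add: cmod_power2)
  also have "\<dots> = \<alpha>\<^sup>2 * ((sin y)\<^sup>2 + (cos y)\<^sup>2) - 2 * \<alpha> * \<beta> * cos y + \<beta>\<^sup>2"
    by algebra
  also have "\<dots> = \<alpha>\<^sup>2 - 2 * \<alpha> * \<beta> * cos y + \<beta>\<^sup>2" by (simp only: sin_cos_squared_add mult_1_right)
  finally show ?thesis .
qed

context coin begin

definition "rho = cmod a"
definition "hh = cis (Arg Dl / 2)"
definition "om \<xi> = Arg Dl / 2 + \<xi>"
definition "zz \<xi> = cis (- om \<xi>)"
definition "kap \<xi> = cos (om \<xi>) / rho"
definition "ss = a / (of_real rho * hh)"
definition "FL \<xi> k = ss ^ k * of_real (Aseq (kap \<xi>) (k - 1)) * b / a"
definition "FR \<xi> k = ss ^ k * (of_real (Aseq (kap \<xi>) k) * zz \<xi> / of_real rho - of_real (Aseq (kap \<xi>) (k - 1)))"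

lemma om_eq: "om \<xi> = omega_of a b c d \<xi>"
  unfolding om_def omega_of_def Dl_def ..

lemma rho_pos: "0 < rho" unfolding rho_def using a_nz by simp
lemma rho_le1: "rho \<le> 1" unfolding rho_def using abs_le1 by simp

lemma hh_nz: "hh \<noteq> 0" unfolding hh_def by (metis cis_neq_zero)

lemma Dl_nz: "Dl \<noteq> 0" using Dl_unit by auto

lemma cmod_Dl: "cmod Dl = 1"
proof -
  have "complex_of_real ((cmod Dl)\<^sup>2) = 1" by (simp only: complex_norm_square Dl_unit)
  hence "(cmod Dl)\<^sup>2 = 1" using of_real_eq_1_iff by blast
  thus ?thesis using norm_ge_zero[of Dl] by (auto simp: power2_eq_1_iff)
qed

lemma hh_sq: "hh * hh = Dl"
proof -
  have "hh * hh = cis (Arg Dl)" unfolding hh_def cis_mult by simp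
  also have "\<dots> = sgn Dl" using Dl_nz by (rule cis_Arg)
  also have "\<dots> = Dl" using cmod_Dl by (simp add: sgn_eq)
  finally show ?thesis .
qed

lemma lam_eq: "cis (- \<xi>) = hh * zz \<xi>"
  unfolding hh_def zz_def om_def cis_mult by simp

lemma lam_cz: "cis (- \<xi>) * cnj (zz \<xi>) = hh"
  unfolding hh_def zz_def om_def cis_cnj cis_mult by simp

lemma z_cz: "zz \<xi> + cnj (zz \<xi>) = 2 * of_real rho * of_real (kap \<xi>)"
proof -
  have "zz \<xi> + cnj (zz \<xi>) = 2 * of_real (cos (om \<xi>))"
    unfolding zz_def cis_cnj by (simp add: complex_eq_iff)
  thus ?thesis unfolding kap_def using rho_pos by simp
qed

lemma c_eq': "c = - (hh * hh) * cnj b" using c_eq hh_sq by simp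
lemma d_eq': "d = hh * hh * cnj a" using d_eq hh_sq by simp
lemma aa: "a * cnj a = of_real rho * of_real rho"
  unfolding rho_def by (simp add: complex_norm_square[symmetric] power2_eq_square)
lemma bbaa: "b * cnj b + a * cnj a = 1" using r1 by (simp add: add.commute)

lemma SE1:
  assumes "1 \<le> k"
  shows "cis (- \<xi>) * FL \<xi> (Suc k) = a * FL \<xi> k + b * FR \<xi> k"
proof -
  have "FL \<xi> (Suc k) = ss ^ k * ss * of_real (Aseq (kap \<xi>) k) * b / a"
    unfolding FL_def by (simp add: power_Suc2)
  hence "cis (- \<xi>) * FL \<xi> (Suc k) = cis (- \<xi>) * (ss ^ k * ss * of_real (Aseq (kap \<xi>) k) * b / a)" by simp
  also have "\<dots> = a * (ss ^ k * of_real (Aseq (kap \<xi>) (k - 1)) * b / a)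
       + b * (ss ^ k * (of_real (Aseq (kap \<xi>) k) * zz \<xi> / of_real rho - of_real (Aseq (kap \<xi>) (k - 1))))"
    by (rule E1_alg) (use a_nz hh_nz rho_pos lam_eq ss_def in auto)
  also have "\<dots> = a * FL \<xi> k + b * FR \<xi> k" unfolding FL_def FR_def ..
  finally show ?thesis .
qed

lemma SE2:
  assumes "1 \<le> k"
  shows "cis (- \<xi>) * FR \<xi> k = c * FL \<xi> (Suc k) + d * FR \<xi> (Suc k)"
proof -
  obtain k' where k: "k = Suc k'" using assms by (cases k) auto
  have A2: "of_real (Aseq (kap \<xi>) (Suc k)) = 2 * of_real (kap \<xi>) * of_real (Aseq (kap \<xi>) k) - of_real (Aseq (kap \<xi>) (k - 1))"
    unfolding k by simp
  have X1: "FL \<xi> (Suc k) = ss ^ k * ss * of_real (Aseq (kap \<xi>) k) * b / a"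
    unfolding FL_def by (simp add: power_Suc2)
  have X2: "FR \<xi> (Suc k) = ss ^ k * ss * (of_real (Aseq (kap \<xi>) (Suc k)) * zz \<xi> / of_real rho - of_real (Aseq (kap \<xi>) k))"
    unfolding FR_def by (simp add: power_Suc2)
  have "cis (- \<xi>) * FR \<xi> k = cis (- \<xi>) * (ss ^ k * (of_real (Aseq (kap \<xi>) k) * zz \<xi> / of_real rho - of_real (Aseq (kap \<xi>) (k - 1))))"
    unfolding FR_def ..
  also have "\<dots> = c * (ss ^ k * ss * of_real (Aseq (kap \<xi>) k) * b / a)
       + d * (ss ^ k * ss * (of_real (Aseq (kap \<xi>) (Suc k)) * zz \<xi> / of_real rho - of_real (Aseq (kap \<xi>) k)))"
    by (rule E2_alg[where cz = "cnj (zz \<xi>)" and h = hh and \<kappa> = "kap \<xi>"])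
       (use a_nz hh_nz rho_pos lam_eq lam_cz z_cz c_eq' d_eq' aa bbaa ss_def A2 in auto)
  also have "\<dots> = c * FL \<xi> (Suc k) + d * FR \<xi> (Suc k)" unfolding X1 X2 ..
  finally show ?thesis .
qed

lemma FL1: "FL \<xi> 1 = 0" unfolding FL_def by simp

lemma FR1_nz: "FR \<xi> 1 \<noteq> 0"
proof -
  have "ss \<noteq> 0" unfolding ss_def using a_nz hh_nz rho_pos by simp
  moreover have "zz \<xi> \<noteq> 0" unfolding zz_def by (metis cis_neq_zero)
  ultimately show ?thesis unfolding FR_def using rho_pos by simp
qed

lemma Eop_local:
  assumes "\<And>i. i < M \<Longrightarrow> v i = w i" "j < M"
  shows "Eop M v j = Eop M w j"
  using assms unfolding Eop_def PL_def PR_def by auto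

lemma Eop_sc: "Eop M (\<lambda>i. sc \<mu> (v i)) j = sc \<mu> (Eop M v j)"
  unfolding Eop_def PL_def PR_def sc_def by (simp add: algebra_simps)

lemma eigen_zero:
  assumes M: "0 < M" and cm: "cmod \<mu> = 1"
    and eig: "\<And>j. j < M \<Longrightarrow> Eop M u j = sc \<mu> (u j)" and j: "j < M"
  shows "u j = 0"
proof -
  have it: "\<forall>j<M. (Eop M ^^ t) u j = sc (\<mu> ^ t) (u j)" for t
  proof (induction t)
    case 0 then show ?case by (simp add: sc_def)
  next
    case (Suc t)
    show ?case
    proof (intro allI impI)
      fix j assume j: "j < M"
      have "(Eop M ^^ Suc t) u j = Eop M ((Eop M ^^ t) u) j" by simp
      also have "\<dots> = Eop M (\<lambda>i. sc (\<mu> ^ t) (u i)) j" by (rule Eop_local) (use Suc j in auto)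
      also have "\<dots> = sc (\<mu> ^ t) (sc \<mu> (u j))" unfolding Eop_sc using eig[OF j] by simp
      also have "\<dots> = sc (\<mu> ^ Suc t) (u j)" unfolding sc_def by (simp add: algebra_simps)
      finally show "(Eop M ^^ Suc t) u j = sc (\<mu> ^ Suc t) (u j)" .
    qed
  qed
  have "(\<lambda>t. norm ((Eop M ^^ t) u j)) \<longlonglongrightarrow> 0"
    using decay[OF M j, of u] by (simp add: tendsto_norm_zero_iff)
  moreover have "norm ((Eop M ^^ t) u j) = norm (u j)" for t
    using it j cm by (simp add: norm_sc norm_power)
  ultimately have "(\<lambda>t. norm (u j)) \<longlonglongrightarrow> 0" by simp
  hence "norm (u j) = 0" by (simp add: LIMSEQ_const_iff)
  thus ?thesis by simp
qed

lemma FRM_nz: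
  assumes M: "0 < M"
  shows "FR \<xi> M \<noteq> 0"
proof
  assume F0: "FR \<xi> M = 0"
  define u where "u j = (FL \<xi> (M - j), FR \<xi> (M - j))" for j
  have eig: "Eop M u j = sc (cis (- \<xi>)) (u j)" if j: "j < M" for j
  proof -
    have f: "fst (Eop M u j) = cis (- \<xi>) * FL \<xi> (M - j)"
    proof (cases "Suc j < M")
      case True
      have "Suc (M - Suc j) = M - j" using True by simp
      then show ?thesis using True SE1[of "M - Suc j" \<xi>] by (simp add: Eop_fst u_def)
    next
      case False
      hence "M - j = 1" using j by simp
      then show ?thesis using False FL1 by (simp add: Eop_fst)
    qed
    have s: "snd (Eop M u j) = cis (- \<xi>) * FR \<xi> (M - j)"
    proof (cases "0 < j")
      case True
      have "M - (j - 1) = Suc (M - j)" using True j by simp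
      then show ?thesis using True j SE2[of "M - j" \<xi>] by (simp add: Eop_snd u_def)
    next
      case False
      then show ?thesis using F0 by (simp add: Eop_snd)
    qed
    show ?thesis using f s by (simp add: sc_def u_def prod_eq_iff)
  qed
  have "u (M - 1) = 0" by (rule eigen_zero[OF M _ eig]) (use M in auto)
  moreover have "M - (M - 1) = 1" using M by simp
  ultimately show False using FR1_nz unfolding u_def by (simp add: prod_eq_iff)
qed

lemma normF:
  "(norm (FL \<xi> k, FR \<xi> k))\<^sup>2 = gfun (kap \<xi>) (rho\<^sup>2) k / rho\<^sup>2"
proof -
  let ?A = "Aseq (kap \<xi>)"
  have css: "cmod ss = 1" unfolding ss_def rho_def hh_def using a_nz by (simp add: norm_divide norm_mult)
  have cb: "(cmod b)\<^sup>2 = 1 - rho\<^sup>2"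
  proof -
    have "complex_of_real ((cmod a)\<^sup>2 + (cmod b)\<^sup>2) = 1"
      by (simp only: of_real_add complex_norm_square r1)
    hence "(cmod a)\<^sup>2 + (cmod b)\<^sup>2 = 1" using of_real_eq_1_iff by blast
    thus ?thesis unfolding rho_def by simp
  qed
  have f1: "(cmod (FL \<xi> k))\<^sup>2 = (?A (k - 1))\<^sup>2 * (1 - rho\<^sup>2) / rho\<^sup>2"
    unfolding FL_def using css cb by (simp add: norm_mult norm_divide norm_power power_mult_distrib power_divide rho_def)
  have e: "of_real (?A k) * zz \<xi> / of_real rho - of_real (?A (k - 1))
        = of_real (?A k / rho) * cis (- om \<xi>) - of_real (?A (k - 1))"
    unfolding zz_def by simp
  have f2: "(cmod (FR \<xi> k))\<^sup>2 = (?A k / rho)\<^sup>2 - 2 * (?A k / rho) * ?A (k - 1) * cos (om \<xi>) + (?A (k - 1))\<^sup>2"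
  proof -
    have "(cmod (FR \<xi> k))\<^sup>2 = (cmod (of_real (?A k / rho) * cis (- om \<xi>) - of_real (?A (k - 1))))\<^sup>2"
      unfolding FR_def norm_mult norm_power css e by simp
    also have "\<dots> = (?A k / rho)\<^sup>2 - 2 * (?A k / rho) * ?A (k - 1) * cos (- om \<xi>) + (?A (k - 1))\<^sup>2"
      by (rule cmod_cis_comb)
    finally show ?thesis by simp
  qed
  have "(norm (FL \<xi> k, FR \<xi> k))\<^sup>2 = (cmod (FL \<xi> k))\<^sup>2 + (cmod (FR \<xi> k))\<^sup>2" by (simp add: normP2)
  also have "\<dots> = gfun (kap \<xi>) (rho\<^sup>2) k / rho\<^sup>2"
    unfolding f1 f2 gfun_def kap_def using rho_pos by (simp add: field_simps power2_eq_square)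
  finally show ?thesis .
qed

theorem comfort_formula:
  assumes M: "0 < M" and j: "j < M"
  shows "comfort a b c d M \<xi> j = gfun (kap \<xi>) (rho\<^sup>2) (M - j) / (\<Sum>k<M. gfun (kap \<xi>) (rho\<^sup>2) (M - k))"
proof -
  define \<beta> where "\<beta> = 1 / FR \<xi> M"
  define \<Phi> where "\<Phi> j = sc \<beta> (FL \<xi> (M - j), FR \<xi> (M - j))" for j
  have nz: "FR \<xi> M \<noteq> 0" by (rule FRM_nz[OF M])
  have S1: "a * fst (\<Phi> (Suc j)) + b * snd (\<Phi> (Suc j)) = cis (- \<xi>) * fst (\<Phi> j)" if "Suc j < M" for j
  proof -
    have "Suc (M - Suc j) = M - j" using that by simp
    thus ?thesis using SE1[of "M - Suc j" \<xi>] that unfolding \<Phi>_def sc_def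
      by (simp add: algebra_simps)
  qed
  have S2: "fst (\<Phi> (M - 1)) = 0" unfolding \<Phi>_def sc_def using M FL1 by simp
  have S3: "c * fst (\<Phi> (j - 1)) + d * snd (\<Phi> (j - 1)) = cis (- \<xi>) * snd (\<Phi> j)" if "0 < j" "j < M" for j
  proof -
    have "M - (j - 1) = Suc (M - j)" using that by simp
    thus ?thesis using SE2[of "M - j" \<xi>] that unfolding \<Phi>_def sc_def
      by (simp add: algebra_simps)
  qed
  have S4: "snd (\<Phi> 0) = 1" unfolding \<Phi>_def sc_def \<beta>_def using nz by simp
  have n: "(norm (\<Phi> i))\<^sup>2 = (cmod \<beta>)\<^sup>2 * (gfun (kap \<xi>) (rho\<^sup>2) (M - i) / rho\<^sup>2)" for i
    unfolding \<Phi>_def norm_sc power_mult_distrib normF ..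
  have "comfort a b c d M \<xi> j = (norm (\<Phi> j))\<^sup>2 / (\<Sum>k<M. (norm (\<Phi> k))\<^sup>2)"
    by (rule comfort_eq[OF M S1 S2 S3 S4 j])
  also have "\<dots> = gfun (kap \<xi>) (rho\<^sup>2) (M - j) / (\<Sum>k<M. gfun (kap \<xi>) (rho\<^sup>2) (M - k))"
    unfolding n sum_distrib_left[symmetric] sum_divide_distrib[symmetric]
    using nz rho_pos by (simp add: \<beta>_def)
  finally show ?thesis .
qed

end

lemma cdf_scaled:
  assumes M: "0 < M" and nn: "\<And>j. 0 \<le> comfort a b c d M \<xi> j"
  shows "cdf (scaled_law a b c d M \<xi>) x = (\<Sum>j\<in>{j. j < M \<and> real j / real M \<le> x}. comfort a b c d M \<xi> j)"
proof -
  let ?w = "comfort a b c d M \<xi>"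
  let ?N = "density (count_space UNIV) (\<lambda>j. ennreal (?w j))"
  let ?f = "\<lambda>j::nat. real j / real M"
  let ?S = "{j. j < M \<and> real j / real M \<le> x}"
  have fm: "?f \<in> measurable ?N borel" by simp
  have "emeasure (distr ?N borel ?f) {..x} = emeasure ?N (?f -` {..x} \<inter> space ?N)"
    by (rule emeasure_distr[OF fm]) simp
  also have "\<dots> = (\<integral>\<^sup>+ j. ennreal (?w j) * indicator (?f -` {..x}) j \<partial>count_space UNIV)"
    by (subst emeasure_density) auto
  also have "\<dots> = (\<Sum>j\<in>?S. ennreal (?w j) * indicator (?f -` {..x}) j)"
  proof (rule nn_integral_count_space')
    show "finite ?S" by simp
  next
    fix j assume "j \<notin> ?S"
    then show "ennreal (?w j) * indicator (?f -` {..x}) j = 0"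
      by (cases "j < M") (auto simp: comfort_def indicator_def)
  qed simp
  also have "\<dots> = (\<Sum>j\<in>?S. ennreal (?w j))"
    by (intro sum.cong) (auto simp: indicator_def)
  also have "\<dots> = ennreal (\<Sum>j\<in>?S. ?w j)" using nn by simp
  finally have "emeasure (scaled_law a b c d M \<xi>) {..x} = ennreal (\<Sum>j\<in>?S. ?w j)"
    unfolding scaled_law_def .
  thus ?thesis unfolding cdf_def measure_def using nn by (simp add: sum_nonneg)
qed

lemma cdf_dens:
  fixes g F :: "real \<Rightarrow> real"
  assumes gm: "g \<in> borel_measurable borel"
    and D: "\<And>t. 0 \<le> t \<Longrightarrow> t \<le> 1 \<Longrightarrow> DERIV F t :> g t"
    and g0: "\<And>t. 0 \<le> t \<Longrightarrow> t \<le> 1 \<Longrightarrow> 0 \<le> g t"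
  shows "cdf (law_with_density g) x = (if x < 0 then 0 else F (min x 1) - F 0)"
proof -
  let ?h = "\<lambda>t. ennreal (indicator {0..1} t * g t)"
  have hm: "?h \<in> borel_measurable lborel" using gm by measurable
  have "emeasure (law_with_density g) {..x} = (\<integral>\<^sup>+ t. ?h t * indicator {..x} t \<partial>lborel)"
    unfolding law_with_density_def by (rule emeasure_density[OF hm]) simp
  also have "\<dots> = (if x < 0 then 0 else ennreal (F (min x 1) - F 0))"
  proof (cases "x < 0")
    case True
    then have z: "(\<lambda>t. ?h t * indicator {..x} t) = (\<lambda>t. 0)" by (auto simp: indicator_def fun_eq_iff)
    show ?thesis using True unfolding z by simp
  next
    case False
    have eq: "?h t * indicator {..x} t = ennreal (g t) * indicator {0 .. min x 1} t" for t
      by (auto simp: indicator_def)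
    have "(\<integral>\<^sup>+ t. ennreal (g t) * indicator {0 .. min x 1} t \<partial>lborel) = ennreal (F (min x 1) - F 0)"
      by (rule nn_integral_FTC_Icc[OF gm]) (use False D g0 in auto)
    then show ?thesis using False unfolding eq by simp
  qed
  finally have e: "emeasure (law_with_density g) {..x} = (if x < 0 then 0 else ennreal (F (min x 1) - F 0))" .
  have mono: "F 0 \<le> F (min x 1)" if "0 \<le> x"
    by (rule DERIV_nonneg_imp_nondecreasing[of 0 "min x 1" F])
       (use that D g0 in \<open>auto intro!: exI\<close>)
  show ?thesis unfolding cdf_def measure_def e using mono by auto
qed

definition Gs :: "real \<Rightarrow> real \<Rightarrow> nat \<Rightarrow> real" where
  "Gs c \<epsilon> K = (\<Sum>k<K. gfun c \<epsilon> (Suc k))"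

lemma Aseq_neg: "Aseq (-\<kappa>) k = (-1) ^ (k + 1) * Aseq \<kappa> k"
  by (induction \<kappa> k rule: Aseq.induct) (auto simp: algebra_simps)

lemma gfun_abs: "gfun \<kappa> \<epsilon> k = gfun \<bar>\<kappa>\<bar> \<epsilon> k"
proof (cases "\<kappa> \<ge> 0")
  case True then show ?thesis by simp
next
  case False
  hence ak: "\<bar>\<kappa>\<bar> = - \<kappa>" by simp
  show ?thesis
  proof (cases k)
    case 0 then show ?thesis by (simp add: gfun_def)
  next
    case (Suc m)
    have p: "((-1::real) ^ m)\<^sup>2 = 1"
    proof -
      have "(-1::real) ^ m * (-1) ^ m = 1" by (simp add: power_add[symmetric])
      thus ?thesis by (simp add: power2_eq_square)
    qed
    have s: "(-1::real) ^ (Suc m + 1) * (-1) ^ (m + 1) = -1"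
      by (simp add: power_add[symmetric])
    have "gfun \<bar>\<kappa>\<bar> \<epsilon> k = (Aseq \<kappa> (Suc m))\<^sup>2 + (Aseq \<kappa> m)\<^sup>2
          - 2 * \<epsilon> * (-\<kappa>) * (((-1) ^ (Suc m + 1) * (-1) ^ (m + 1)) * Aseq \<kappa> (Suc m) * Aseq \<kappa> m)"
      unfolding gfun_def ak Aseq_neg Suc by (simp add: power_mult_distrib algebra_simps p)
    also have "\<dots> = gfun \<kappa> \<epsilon> k" unfolding s gfun_def Suc by simp
    finally show ?thesis ..
  qed
qed

lemma gfun_nonneg:
  assumes "0 \<le> \<epsilon> * c" "\<epsilon> * c \<le> 1"
  shows "0 \<le> gfun c \<epsilon> k"
proof -
  let ?x = "Aseq c k" and ?y = "Aseq c (k - 1)"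
  have "2 * (?x * ?y) \<le> ?x\<^sup>2 + ?y\<^sup>2"
    using zero_le_power2[of "?x - ?y"] by (simp add: power2_diff)
  hence "(\<epsilon> * c) * (2 * (?x * ?y)) \<le> (\<epsilon> * c) * (?x\<^sup>2 + ?y\<^sup>2)"
    using assms(1) by (rule mult_left_mono)
  hence "2 * (\<epsilon> * c) * (?x * ?y) \<le> (\<epsilon> * c) * (?x\<^sup>2 + ?y\<^sup>2)" by simp
  also have "\<dots> \<le> 1 * (?x\<^sup>2 + ?y\<^sup>2)" using assms(2) by (intro mult_right_mono) auto
  finally show ?thesis unfolding gfun_def by (simp add: algebra_simps)
qed

lemma gfun1: "gfun c \<epsilon> 1 = 1" by (simp add: gfun_def)

lemma Gs_pos:
  assumes "0 \<le> \<epsilon> * c" "\<epsilon> * c \<le> 1" "0 < K"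
  shows "0 < Gs c \<epsilon> K"
proof -
  have "gfun c \<epsilon> (Suc 0) \<le> Gs c \<epsilon> K" unfolding Gs_def
    using assms by (intro member_le_sum gfun_nonneg) auto
  thus ?thesis using gfun1 by simp
qed

lemma Gs_nonneg: "0 \<le> \<epsilon> * c \<Longrightarrow> \<epsilon> * c \<le> 1 \<Longrightarrow> 0 \<le> Gs c \<epsilon> K"
  unfolding Gs_def by (auto intro: sum_nonneg gfun_nonneg)

lemma Gs_add: "Gs c \<epsilon> (K + m) = Gs c \<epsilon> K + (\<Sum>i<m. gfun c \<epsilon> (Suc (K + i)))"
  by (induction m) (auto simp: Gs_def)

lemma sum_refl_G: "(\<Sum>k<M. gfun c \<epsilon> (M - k)) = Gs c \<epsilon> M"
proof -
  have "(\<Sum>k<M. gfun c \<epsilon> (M - k)) = (\<Sum>k<M. (\<lambda>i. gfun c \<epsilon> (Suc i)) (M - Suc k))"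
    by (intro sum.cong) (auto simp: Suc_diff_Suc)
  also have "\<dots> = Gs c \<epsilon> M" unfolding Gs_def by (rule sum.nat_diff_reindex)
  finally show ?thesis .
qed

lemma sum_partial_G:
  assumes "n < M"
  shows "(\<Sum>j\<le>n. gfun c \<epsilon> (M - j)) = Gs c \<epsilon> M - Gs c \<epsilon> (M - n - 1)"
proof -
  define K where "K = M - n - 1"
  have MK: "M = K + Suc n" using assms unfolding K_def by simp
  have "(\<Sum>j\<le>n. gfun c \<epsilon> (M - j)) = (\<Sum>j<Suc n. (\<lambda>i. gfun c \<epsilon> (Suc (K + i))) (Suc n - Suc j))"
    unfolding lessThan_Suc_atMost MK by (intro sum.cong) (auto simp: Suc_diff_le)
  also have "\<dots> = (\<Sum>i<Suc n. gfun c \<epsilon> (Suc (K + i)))" by (rule sum.nat_diff_reindex)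
  also have "\<dots> = Gs c \<epsilon> M - Gs c \<epsilon> K" unfolding MK Gs_add by simp
  finally show ?thesis unfolding K_def .
qed

context coin begin

lemma rho_lt1: "rho < 1"
proof -
  have "complex_of_real ((cmod a)\<^sup>2 + (cmod b)\<^sup>2) = 1"
    by (simp only: of_real_add complex_norm_square r1)
  hence "(cmod a)\<^sup>2 + (cmod b)\<^sup>2 = 1" using of_real_eq_1_iff by blast
  moreover have "0 < cmod b" using b_nz by simp
  ultimately have "rho\<^sup>2 < 1" unfolding rho_def by (smt (verit) zero_less_power2)
  thus ?thesis using rho_pos by (simp add: power2_less_imp_less)
qed

lemma eps_c: "0 \<le> rho\<^sup>2 * \<bar>kap \<xi>\<bar>" "rho\<^sup>2 * \<bar>kap \<xi>\<bar> \<le> rho"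
proof -
  show "0 \<le> rho\<^sup>2 * \<bar>kap \<xi>\<bar>" by simp
  have "rho\<^sup>2 * \<bar>kap \<xi>\<bar> = rho * \<bar>cos (om \<xi>)\<bar>" unfolding kap_def using rho_pos
    by (simp add: power2_eq_square abs_divide)
  also have "\<dots> \<le> rho * 1" using rho_pos by (intro mult_left_mono) auto
  finally show "rho\<^sup>2 * \<bar>kap \<xi>\<bar> \<le> rho" by simp
qed

lemma eps_c1: "rho\<^sup>2 * \<bar>kap \<xi>\<bar> \<le> 1" using eps_c(2)[of \<xi>] rho_le1 by linarith

lemma comfort_G:
  assumes M: "0 < M" and j: "j < M"
  shows "comfort a b c d M \<xi> j = gfun \<bar>kap \<xi>\<bar> (rho\<^sup>2) (M - j) / Gs \<bar>kap \<xi>\<bar> (rho\<^sup>2) M"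
  using comfort_formula[OF M j, of \<xi>] unfolding gfun_abs[of "kap \<xi>"] sum_refl_G .

lemma comfort_nonneg: "0 \<le> comfort a b c d M \<xi> j"
proof (cases "0 < M \<and> j < M")
  case True
  then show ?thesis using comfort_G[of M j \<xi>] eps_c(1) eps_c1
    by (simp add: gfun_nonneg Gs_nonneg)
next
  case False
  then show ?thesis by (auto simp: comfort_def)
qed

lemma cdf_G:
  assumes M: "0 < M"
  shows "cdf (scaled_law a b c d M \<xi>) x =
    (if x < 0 then 0 else if 1 \<le> x then 1
     else 1 - Gs \<bar>kap \<xi>\<bar> (rho\<^sup>2) (M - nat \<lfloor>x * real M\<rfloor> - 1) / Gs \<bar>kap \<xi>\<bar> (rho\<^sup>2) M)"
proof -
  let ?c = "\<bar>kap \<xi>\<bar>" and ?e = "rho\<^sup>2"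
  let ?S = "{j. j < M \<and> real j / real M \<le> x}"
  have Gp: "0 < Gs ?c ?e M" using Gs_pos[OF eps_c(1) eps_c1 M] .
  have cdf: "cdf (scaled_law a b c d M \<xi>) x = (\<Sum>j\<in>?S. comfort a b c d M \<xi> j)"
    by (rule cdf_scaled[OF M comfort_nonneg])
  have cg: "(\<Sum>j\<in>A. comfort a b c d M \<xi> j) = (\<Sum>j\<in>A. gfun ?c ?e (M - j)) / Gs ?c ?e M"
    if "A \<subseteq> {..<M}" for A
    unfolding sum_divide_distrib using that by (intro sum.cong refl comfort_G[OF M]) auto
  show ?thesis
  proof (cases "x < 0")
    case True
    have "\<not> (real j / real M \<le> x)" for j
      using True divide_nonneg_nonneg[of "real j" "real M"] by linarith
    hence Se: "?S = {}" by auto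
    show ?thesis unfolding cdf Se using True by simp
  next
    case False
    show ?thesis
    proof (cases "1 \<le> x")
      case True
      have le1: "real j / real M \<le> 1" if "j < M" for j using that M by (simp add: divide_le_eq)
      have "real j / real M \<le> x" if "j < M" for j using le1[OF that] True by linarith
      hence "?S = {..<M}" by auto
      then show ?thesis unfolding cdf using True False cg[of "{..<M}"] Gp
        by (simp add: sum_refl_G)
    next
      case x1: False
      define n where "n = nat \<lfloor>x * real M\<rfloor>"
      have xM: "x * real M < real M" using x1 M by simp
      have nM: "n < M" unfolding n_def using xM False
        by (metis floor_less_iff nat_less_iff of_int_of_nat_eq of_nat_0_le_iff order_le_less_trans zero_le_floor mult_nonneg_nonneg not_less of_nat_0_le_iff)
      have S: "?S = {..n}"
      proof (intro set_eqI iffI)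
        fix j assume "j \<in> ?S"
        hence "real j \<le> x * real M" using M by (simp add: divide_le_eq)
        hence "int j \<le> \<lfloor>x * real M\<rfloor>" by (simp add: le_floor_iff)
        thus "j \<in> {..n}" unfolding n_def by simp
      next
        fix j assume "j \<in> {..n}"
        hence "int j \<le> \<lfloor>x * real M\<rfloor>" unfolding n_def using False by (simp add: le_nat_iff)
        hence "real j \<le> x * real M" by (simp add: le_floor_iff)
        moreover have "j < M" using \<open>j \<in> {..n}\<close> nM by simp
        ultimately show "j \<in> ?S" using M by (simp add: divide_le_eq)
      qed
      have sub: "{..n} \<subseteq> {..<M}" using nM by auto
      have "(\<Sum>j\<in>?S. comfort a b c d M \<xi> j) = (\<Sum>j\<le>n. gfun ?c ?e (M - j)) / Gs ?c ?e M"
        unfolding S by (rule cg[OF sub])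
      also have "\<dots> = (Gs ?c ?e M - Gs ?c ?e (M - n - 1)) / Gs ?c ?e M"
        by (simp only: sum_partial_G[OF nM])
      also have "\<dots> = 1 - Gs ?c ?e (M - n - 1) / Gs ?c ?e M" using Gp by (simp add: field_simps)
      finally show ?thesis unfolding cdf n_def using False x1 by simp
    qed
  qed
qed

end

lemma trig1: "(sin (\<alpha>::real))\<^sup>2 + (sin \<beta>)\<^sup>2 = 1 - cos (\<alpha> + \<beta>) * cos (\<alpha> - \<beta>)"
proof -
  have "cos (\<alpha> + \<beta>) * cos (\<alpha> - \<beta>) = (cos \<alpha>)\<^sup>2 * (cos \<beta>)\<^sup>2 - (sin \<alpha>)\<^sup>2 * (sin \<beta>)\<^sup>2"
    by (simp add: cos_add cos_diff power2_eq_square algebra_simps)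
  also have "\<dots> = (1 - (sin \<alpha>)\<^sup>2) * (1 - (sin \<beta>)\<^sup>2) - (sin \<alpha>)\<^sup>2 * (sin \<beta>)\<^sup>2"
    by (simp add: cos_squared_eq)
  finally show ?thesis by (simp add: algebra_simps)
qed

lemma trig2: "2 * sin (\<alpha>::real) * sin \<beta> = cos (\<alpha> - \<beta>) - cos (\<alpha> + \<beta>)"
  by (simp add: cos_add cos_diff)

lemma trig3: "sin ((u::real) + \<theta>) - sin (u - \<theta>) = 2 * cos u * sin \<theta>"
  by (simp add: sin_add sin_diff)

lemma trig4: "sin ((u::real) + \<theta>) + sin (u - \<theta>) = 2 * sin u * cos \<theta>"
  by (simp add: sin_add sin_diff)

lemma Aseq_ell_aux:
  assumes "sin \<theta> \<noteq> 0"
  shows "Aseq (cos \<theta>) k = sin (real k * \<theta>) / sin \<theta> \<and>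
         Aseq (cos \<theta>) (Suc k) = sin (real (Suc k) * \<theta>) / sin \<theta>"
proof (induction k)
  case 0 then show ?case using assms by simp
next
  case (Suc k)
  have "sin (real (Suc (Suc k)) * \<theta>) = 2 * sin (real (Suc k) * \<theta>) * cos \<theta> - sin (real k * \<theta>)"
    using trig4[of "real (Suc k) * \<theta>" \<theta>] by (simp add: algebra_simps)
  then show ?case using Suc assms by (simp add: field_simps)
qed

lemma Aseq_ell: "sin \<theta> \<noteq> 0 \<Longrightarrow> Aseq (cos \<theta>) k = sin (real k * \<theta>) / sin \<theta>"
  using Aseq_ell_aux by blast

lemma gfun_ell:
  assumes s: "sin \<theta> \<noteq> 0"
  shows "gfun (cos \<theta>) \<epsilon> (Suc m) * (sin \<theta>)\<^sup>2
       = (1 - \<epsilon> * (cos \<theta>)\<^sup>2) - (1 - \<epsilon>) * cos \<theta> * cos ((2 * real m + 1) * \<theta>)"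
proof -
  define \<alpha> where "\<alpha> = real (Suc m) * \<theta>"
  define \<beta> where "\<beta> = real m * \<theta>"
  have ab1: "\<alpha> + \<beta> = (2 * real m + 1) * \<theta>" "\<alpha> - \<beta> = \<theta>"
    unfolding \<alpha>_def \<beta>_def by (simp_all add: algebra_simps)
  have "gfun (cos \<theta>) \<epsilon> (Suc m) * (sin \<theta>)\<^sup>2
      = (sin \<alpha>)\<^sup>2 + (sin \<beta>)\<^sup>2 - \<epsilon> * cos \<theta> * (2 * sin \<alpha> * sin \<beta>)"
    unfolding gfun_def Aseq_ell[OF s] \<alpha>_def \<beta>_def using s
    by (simp add: field_simps power2_eq_square)
  also have "\<dots> = (1 - \<epsilon> * (cos \<theta>)\<^sup>2) - (1 - \<epsilon>) * cos \<theta> * cos ((2 * real m + 1) * \<theta>)"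
    unfolding trig1 trig2 ab1 by (simp add: algebra_simps power2_eq_square)
  finally show ?thesis .
qed

definition Hs :: "real \<Rightarrow> real \<Rightarrow> nat \<Rightarrow> real" where
  "Hs \<theta> \<epsilon> K = real K * (1 - \<epsilon> * (cos \<theta>)\<^sup>2) - (1 - \<epsilon>) * cos \<theta> * sin (2 * real K * \<theta>) / (2 * sin \<theta>)"

lemma Gs_ell:
  assumes s: "sin \<theta> \<noteq> 0"
  shows "Gs (cos \<theta>) \<epsilon> K * (sin \<theta>)\<^sup>2 = Hs \<theta> \<epsilon> K"
proof (induction K)
  case 0 then show ?case by (simp add: Gs_def Hs_def)
next
  case (Suc K)
  have t: "sin (2 * real (Suc K) * \<theta>) - sin (2 * real K * \<theta>) = 2 * cos ((2 * real K + 1) * \<theta>) * sin \<theta>"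
    using trig3[of "(2 * real K + 1) * \<theta>" \<theta>] by (simp add: algebra_simps)
  have "Gs (cos \<theta>) \<epsilon> (Suc K) * (sin \<theta>)\<^sup>2 = Gs (cos \<theta>) \<epsilon> K * (sin \<theta>)\<^sup>2 + gfun (cos \<theta>) \<epsilon> (Suc K) * (sin \<theta>)\<^sup>2"
    by (simp add: Gs_def algebra_simps)
  also have "\<dots> = Hs \<theta> \<epsilon> K + ((1 - \<epsilon> * (cos \<theta>)\<^sup>2) - (1 - \<epsilon>) * cos \<theta> * cos ((2 * real K + 1) * \<theta>))"
    unfolding Suc gfun_ell[OF s] ..
  also have "\<dots> = Hs \<theta> \<epsilon> (Suc K)"
  proof -
    have "(1 - \<epsilon>) * cos \<theta> * sin (2 * real (Suc K) * \<theta>) / (2 * sin \<theta>)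
        = (1 - \<epsilon>) * cos \<theta> * sin (2 * real K * \<theta>) / (2 * sin \<theta>) + (1 - \<epsilon>) * cos \<theta> * cos ((2 * real K + 1) * \<theta>)"
    proof -
      have "sin (2 * real (Suc K) * \<theta>) = sin (2 * real K * \<theta>) + 2 * cos ((2 * real K + 1) * \<theta>) * sin \<theta>"
        using t by simp
      thus ?thesis using s by (simp add: field_simps)
    qed
    thus ?thesis unfolding Hs_def by (simp add: algebra_simps)
  qed
  finally show ?case .
qed

lemma Aseq_par: "Aseq 1 k = real k"
proof -
  have "Aseq 1 k = real k \<and> Aseq 1 (Suc k) = real (Suc k)"
    by (induction k) auto
  thus ?thesis by simp
qed

lemma Gs_par: "Gs 1 \<epsilon> K = 2 * (1 - \<epsilon>) / 3 * (real K + 1) * real K * (real K - 1) + real K"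
proof (induction K)
  case 0 then show ?case by (simp add: Gs_def)
next
  case (Suc K)
  have g: "gfun 1 \<epsilon> (Suc K) = 2 * (1 - \<epsilon>) * (real K + 1) * real K + 1"
    unfolding gfun_def Aseq_par by (simp add: power2_eq_square algebra_simps)
  have G: "Gs 1 \<epsilon> (Suc K) = Gs 1 \<epsilon> K + gfun 1 \<epsilon> (Suc K)" by (simp add: Gs_def)
  show ?case unfolding G g Suc.IH by (simp add: field_simps)
qed

lemma gfun_lower:
  assumes "0 \<le> \<epsilon> * c" "\<epsilon> * c \<le> 1"
  shows "(1 - \<epsilon> * c) * ((Aseq c k)\<^sup>2 + (Aseq c (k - 1))\<^sup>2) \<le> gfun c \<epsilon> k"
proof -
  let ?x = "Aseq c k" and ?y = "Aseq c (k - 1)"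
  have "2 * (?x * ?y) \<le> ?x\<^sup>2 + ?y\<^sup>2"
    using zero_le_power2[of "?x - ?y"] by (simp add: power2_diff)
  hence "(\<epsilon> * c) * (2 * (?x * ?y)) \<le> (\<epsilon> * c) * (?x\<^sup>2 + ?y\<^sup>2)"
    using assms(1) by (rule mult_left_mono)
  thus ?thesis unfolding gfun_def by (simp add: algebra_simps)
qed

locale hyp =
  fixes c :: real
  assumes c1: "1 < c"
begin

definition "r = c + sqrt (c\<^sup>2 - 1)"

lemma c2: "1 \<le> c\<^sup>2" using c1 one_le_power[of c 2] by simp

lemma r_gt1: "1 < r"
  unfolding r_def using c1 c2 real_sqrt_ge_zero[of "c\<^sup>2 - 1"] by linarith

lemma r2: "1 < r\<^sup>2" using r_gt1 one_less_power[of r 2] by simp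

lemma r_inv: "1 / r = c - sqrt (c\<^sup>2 - 1)"
proof -
  have "(c + sqrt (c\<^sup>2 - 1)) * (c - sqrt (c\<^sup>2 - 1)) = 1"
    using c1 by (simp add: algebra_simps power2_eq_square[symmetric])
  thus ?thesis unfolding r_def using r_gt1 r_def by (simp add: field_simps)
qed

lemma r_sum: "2 * c - r = 1 / r" unfolding r_inv unfolding r_def by simp

lemma hyp1: "Aseq c (Suc k) - r * Aseq c k = (1 / r) ^ k"
proof (induction k)
  case 0 then show ?case by simp
next
  case (Suc k)
  have "Aseq c (Suc (Suc k)) - r * Aseq c (Suc k) = (2 * c - r) * Aseq c (Suc k) - Aseq c k" by (simp add: algebra_simps)
  also have "\<dots> = (1 / r) * (Aseq c (Suc k) - r * Aseq c k)" unfolding r_sum using r_gt1 by (simp add: field_simps)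
  finally show ?case using Suc by simp
qed

lemma hyp2: "0 \<le> Aseq c k \<and> r * Aseq c k \<le> Aseq c (Suc k)"
proof (induction k)
  case 0 then show ?case by simp
next
  case (Suc k)
  have "0 \<le> Aseq c (Suc k)" using Suc r_gt1 by (smt (verit) mult_nonneg_nonneg)
  moreover have "r * Aseq c (Suc k) \<le> Aseq c (Suc (Suc k))"
  proof -
    have "0 \<le> (1 / r) ^ Suc k" using r_gt1 by simp
    thus ?thesis using hyp1[of "Suc k"] by linarith
  qed
  ultimately show ?case by simp
qed

lemma hyp3: "r ^ m * Aseq c k \<le> Aseq c (k + m)"
proof (induction m)
  case 0 then show ?case by simp
next
  case (Suc m)
  have "r ^ Suc m * Aseq c k = r * (r ^ m * Aseq c k)" by simp
  also have "\<dots> \<le> r * Aseq c (k + m)" using Suc r_gt1 by (intro mult_left_mono) auto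
  also have "\<dots> \<le> Aseq c (k + Suc m)" using hyp2[of "k + m"] by simp
  finally show ?case .
qed

lemma A_mono: "Aseq c k \<le> Aseq c (Suc k)"
  using hyp2[of k] r_gt1 by (smt (verit) mult_le_cancel_right1)

lemma gfun_upper:
  assumes "0 \<le> \<epsilon> * c"
  shows "gfun c \<epsilon> k \<le> 2 * (Aseq c k)\<^sup>2"
proof -
  have "Aseq c (k - 1) \<le> Aseq c k" using A_mono[of "k - 1"] by (cases k) auto
  moreover have "0 \<le> Aseq c (k - 1)" using hyp2 by blast
  ultimately have "(Aseq c (k - 1))\<^sup>2 \<le> (Aseq c k)\<^sup>2" by (intro power_mono) auto
  moreover have "0 \<le> \<epsilon> * c * Aseq c k * Aseq c (k - 1)" using assms hyp2 by simp
  ultimately show ?thesis unfolding gfun_def by (simp add: algebra_simps)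
qed

lemma Gs_upper:
  assumes "0 \<le> \<epsilon> * c"
  shows "Gs c \<epsilon> K \<le> 2 * (Aseq c K)\<^sup>2 / (1 - 1 / r\<^sup>2)"
proof -
  let ?q = "1 / r\<^sup>2"
  have q: "0 \<le> ?q" "?q < 1" using r_gt1 by auto
  have Ak: "(Aseq c (Suc k))\<^sup>2 \<le> (Aseq c K)\<^sup>2 * ?q ^ (K - Suc k)" if "k < K" for k
  proof -
    have "r ^ (K - Suc k) * Aseq c (Suc k) \<le> Aseq c K" using hyp3[of "K - Suc k" "Suc k"] that by simp
    hence "(r ^ (K - Suc k) * Aseq c (Suc k))\<^sup>2 \<le> (Aseq c K)\<^sup>2"
      using hyp2 r_gt1 by (intro power_mono) auto
    hence "(r\<^sup>2) ^ (K - Suc k) * (Aseq c (Suc k))\<^sup>2 \<le> (Aseq c K)\<^sup>2"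
      by (simp add: power_mult_distrib power_mult[symmetric] mult.commute)
    moreover have "0 < (r\<^sup>2) ^ (K - Suc k)" using r_gt1 by simp
    ultimately show ?thesis by (simp add: field_simps power_divide)
  qed
  have "Gs c \<epsilon> K \<le> (\<Sum>k<K. 2 * ((Aseq c K)\<^sup>2 * ?q ^ (K - Suc k)))"
    unfolding Gs_def
  proof (intro sum_mono)
    fix k assume "k \<in> {..<K}"
    hence k: "k < K" by simp
    have "gfun c \<epsilon> (Suc k) \<le> 2 * (Aseq c (Suc k))\<^sup>2" by (rule gfun_upper[OF assms])
    also have "\<dots> \<le> 2 * ((Aseq c K)\<^sup>2 * ?q ^ (K - Suc k))" using Ak[OF k] by simp
    finally show "gfun c \<epsilon> (Suc k) \<le> 2 * ((Aseq c K)\<^sup>2 * ?q ^ (K - Suc k))" .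
  qed
  also have "\<dots> = 2 * (Aseq c K)\<^sup>2 * (\<Sum>k<K. ?q ^ (K - Suc k))"
    by (simp add: sum_distrib_left algebra_simps)
  also have "(\<Sum>k<K. ?q ^ (K - Suc k)) = (\<Sum>k<K. ?q ^ k)" by (rule sum.nat_diff_reindex)
  also have "(\<Sum>k<K. ?q ^ k) \<le> 1 / (1 - ?q)"
  proof -
    have "?q \<noteq> 1" using r2 by simp
    hence "(\<Sum>k<K. ?q ^ k) = (1 - ?q ^ K) / (1 - ?q)" by (simp only: sum_gp_strict if_False)
    also have "\<dots> \<le> 1 / (1 - ?q)" using q by (intro divide_right_mono) auto
    finally show ?thesis .
  qed
  hence "2 * (Aseq c K)\<^sup>2 * (\<Sum>k<K. ?q ^ k) \<le> 2 * (Aseq c K)\<^sup>2 * (1 / (1 - ?q))"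
    by (intro mult_left_mono) auto
  finally show ?thesis by simp
qed

lemma ratio_bound:
  assumes "0 \<le> \<epsilon> * c" "\<epsilon> * c < 1" "K \<le> M" "0 < M"
  shows "Gs c \<epsilon> K / Gs c \<epsilon> M \<le> 2 / ((1 - 1 / r\<^sup>2) * (1 - \<epsilon> * c)) * (1 / r\<^sup>2) ^ (M - K)"
proof -
  let ?q = "1 / r\<^sup>2"
  have q: "0 \<le> ?q" "?q < 1" using r_gt1 by auto
  have e1: "0 < 1 - \<epsilon> * c" using assms by simp
  have GM: "(1 - \<epsilon> * c) * (Aseq c M)\<^sup>2 \<le> Gs c \<epsilon> M"
  proof -
    obtain m where m: "M = Suc m" using assms by (cases M) auto
    have "(1 - \<epsilon> * c) * (Aseq c M)\<^sup>2 \<le> (1 - \<epsilon> * c) * ((Aseq c M)\<^sup>2 + (Aseq c (M - 1))\<^sup>2)"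
      using e1 by (intro mult_left_mono) auto
    also have "\<dots> \<le> gfun c \<epsilon> M" using gfun_lower assms by simp
    also have "\<dots> \<le> Gs c \<epsilon> M" unfolding Gs_def m
      using assms by (intro member_le_sum gfun_nonneg) auto
    finally show ?thesis .
  qed
  have AM: "(r\<^sup>2) ^ (M - K) * (Aseq c K)\<^sup>2 \<le> (Aseq c M)\<^sup>2"
  proof -
    have "r ^ (M - K) * Aseq c K \<le> Aseq c M" using hyp3[of "M - K" K] assms by simp
    hence "(r ^ (M - K) * Aseq c K)\<^sup>2 \<le> (Aseq c M)\<^sup>2" using hyp2 r_gt1 by (intro power_mono) auto
    thus ?thesis by (simp add: power_mult_distrib power_mult[symmetric] mult.commute)
  qed
  have Gp: "0 < Gs c \<epsilon> M" using Gs_pos assms by simp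
  show ?thesis
  proof (cases "Aseq c K = 0")
    case True
    hence "Gs c \<epsilon> K \<le> 0" using Gs_upper[OF assms(1), of K] by simp
    moreover have "0 \<le> 2 / ((1 - 1 / r\<^sup>2) * (1 - \<epsilon> * c)) * (1 / r\<^sup>2) ^ (M - K)" using q e1 by simp
    ultimately show ?thesis using Gp by (smt (verit) divide_nonpos_pos)
  next
    case False
    have A2: "0 < (Aseq c K)\<^sup>2" using False by simp
    have "Gs c \<epsilon> K / Gs c \<epsilon> M \<le> (2 * (Aseq c K)\<^sup>2 / (1 - ?q)) / ((1 - \<epsilon> * c) * ((r\<^sup>2) ^ (M - K) * (Aseq c K)\<^sup>2))"
    proof (rule frac_le)
      show "0 \<le> 2 * (Aseq c K)\<^sup>2 / (1 - ?q)" using q by simp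
      show "Gs c \<epsilon> K \<le> 2 * (Aseq c K)\<^sup>2 / (1 - ?q)" by (rule Gs_upper[OF assms(1)])
      show "0 < (1 - \<epsilon> * c) * ((r\<^sup>2) ^ (M - K) * (Aseq c K)\<^sup>2)" using e1 A2 r_gt1 by simp
      show "(1 - \<epsilon> * c) * ((r\<^sup>2) ^ (M - K) * (Aseq c K)\<^sup>2) \<le> Gs c \<epsilon> M"
        using GM AM e1 by (smt (verit) mult_left_mono)
    qed
    also have "\<dots> = 2 / ((1 - ?q) * (1 - \<epsilon> * c)) * (1 / (r\<^sup>2) ^ (M - K))"
    proof -
      define R where "R = (r\<^sup>2) ^ (M - K)"
      define Q where "Q = 1 - ?q"
      define E where "E = 1 - \<epsilon> * c"
      have "R \<noteq> 0" using r_gt1 unfolding R_def by simp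
      moreover have "Q \<noteq> 0" unfolding Q_def using q(2) by linarith
      moreover have "E \<noteq> 0" unfolding E_def using e1 by linarith
      ultimately have "R \<noteq> 0 \<and> Q \<noteq> 0 \<and> E \<noteq> 0" by blast
      thus ?thesis using A2 unfolding R_def[symmetric] Q_def[symmetric] E_def[symmetric]
        by (simp add: field_simps)
    qed
    also have "\<dots> = 2 / ((1 - ?q) * (1 - \<epsilon> * c)) * ?q ^ (M - K)"
      by (simp add: power_one_over)
    finally show ?thesis .
  qed
qed

end

lemma sin_coeff_sum3: "(\<Sum>m<3. sin_coeff m * x ^ m) = (x::real)"
  by (simp add: numeral_3_eq_3 sin_coeff_Suc cos_coeff_Suc)

lemma sin_coeff_sum5: "(\<Sum>m<5. sin_coeff m * x ^ m) = (x::real) - x ^ 3 / 6"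
  by (simp add: eval_nat_numeral sin_coeff_Suc cos_coeff_Suc)

lemma sin_lower:
  fixes x :: real
  assumes "0 \<le> x" "x \<le> 2"
  shows "x / 3 \<le> sin x"
proof -
  have "\<bar>sin x - x\<bar> \<le> inverse (fact 3) * \<bar>x\<bar> ^ 3"
    using Maclaurin_sin_bound[of x 3] unfolding sin_coeff_sum3 .
  hence h: "\<bar>sin x - x\<bar> \<le> x ^ 3 / 6" using assms by (simp add: fact_numeral)
  hence "x - x ^ 3 / 6 \<le> sin x" unfolding abs_le_iff by linarith
  moreover have "x ^ 3 / 6 \<le> 2 * x / 3"
  proof -
    have "x * x \<le> 2 * 2" using assms by (intro mult_mono) auto
    hence "x ^ 3 \<le> 4 * x" using assms by (simp add: power3_eq_cube mult_right_mono)
    thus ?thesis by simp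
  qed
  ultimately show ?thesis by simp
qed

lemma sin_less:
  fixes x :: real
  assumes "0 < x"
  shows "sin x < x"
proof (cases "x < 2")
  case True
  have "\<bar>sin x - (x - x ^ 3 / 6)\<bar> \<le> inverse (fact 5) * \<bar>x\<bar> ^ 5"
    using Maclaurin_sin_bound[of x 5] unfolding sin_coeff_sum5 .
  hence h: "\<bar>sin x - (x - x ^ 3 / 6)\<bar> \<le> x ^ 5 / 120" using assms by (simp add: fact_numeral)
  hence "sin x \<le> x - x ^ 3 / 6 + x ^ 5 / 120" unfolding abs_le_iff by linarith
  moreover have "x ^ 5 / 120 < x ^ 3 / 6"
  proof -
    have "x * x < 2 * 2" using assms True by (intro mult_strict_mono) auto
    hence "x ^ 3 * (x * x) < x ^ 3 * 20" using assms by (intro mult_strict_left_mono) auto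
    thus ?thesis by (simp add: eval_nat_numeral algebra_simps)
  qed
  ultimately show ?thesis by simp
next
  case False
  then show ?thesis using sin_le_one[of x] by linarith
qed

lemma ratio_lim:
  fixes f g h :: "nat \<Rightarrow> real"
  assumes "(\<lambda>M. f M / h M) \<longlonglongrightarrow> A" "(\<lambda>M. g M / h M) \<longlonglongrightarrow> B" "B \<noteq> 0"
    "eventually (\<lambda>M. h M \<noteq> 0) sequentially"
  shows "(\<lambda>M. f M / g M) \<longlonglongrightarrow> A / B"
proof -
  have "(\<lambda>M. (f M / h M) / (g M / h M)) \<longlonglongrightarrow> A / B"
    using assms by (intro tendsto_divide) auto
  moreover have "eventually (\<lambda>M. (f M / h M) / (g M / h M) = f M / g M) sequentially"
    using assms(4) by eventually_elim simp
  ultimately show ?thesis by (rule Lim_transform_eventually)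
qed

lemma K_lim:
  assumes "0 \<le> x" "x < 1"
  shows "(\<lambda>M. real (M - nat \<lfloor>x * real M\<rfloor> - 1) / real M) \<longlonglongrightarrow> 1 - x"
proof -
  have ev: "eventually (\<lambda>M. \<bar>real (M - nat \<lfloor>x * real M\<rfloor> - 1) / real M - (1 - x)\<bar> \<le> 1 / real M) sequentially"
    using eventually_gt_at_top[of 0]
  proof eventually_elim
    case (elim M)
    define n where "n = nat \<lfloor>x * real M\<rfloor>"
    have f1: "real n \<le> x * real M" "x * real M < real n + 1" unfolding n_def using assms
      by (simp_all add: of_nat_nat)
    have "x * real M < real M" using assms elim by simp
    hence nM: "n + 1 \<le> M" using f1 by linarith
    hence e: "real (M - n - 1) = real M - real n - 1" by (simp add: of_nat_diff)
    have "\<bar>(real M - real n - 1) / real M - (1 - x)\<bar> = \<bar>x * real M - real n - 1\<bar> / real M"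
      using elim by (simp add: field_simps)
    also have "\<dots> \<le> 1 / real M" using f1 elim by (intro divide_right_mono) auto
    finally show ?case unfolding n_def[symmetric] e .
  qed
  have "(\<lambda>M. real (M - nat \<lfloor>x * real M\<rfloor> - 1) / real M - (1 - x)) \<longlonglongrightarrow> 0"
    by (rule Lim_null_comparison[OF _ lim_inverse_n']) (use ev in simp)
  thus ?thesis by (rule LIM_zero_cancel)
qed

lemma K_gap:
  assumes "0 < x" "x < 1"
  shows "filterlim (\<lambda>M. M - (M - nat \<lfloor>x * real M\<rfloor> - 1)) at_top sequentially"
proof -
  have "filterlim (\<lambda>M. x * real M) at_top sequentially"
    using assms by (intro filterlim_tendsto_pos_mult_at_top[OF tendsto_const] filterlim_real_sequentially) auto
  hence A: "filterlim (\<lambda>M. nat \<lfloor>x * real M\<rfloor>) at_top sequentially"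
    by (intro filterlim_compose[OF filterlim_nat_sequentially] filterlim_compose[OF filterlim_floor_sequentially])
  have B: "nat \<lfloor>x * real M\<rfloor> \<le> M - (M - nat \<lfloor>x * real M\<rfloor> - 1)" for M
  proof -
    have "x * real M \<le> real M" using assms by (simp add: mult_left_le_one_le)
    hence "nat \<lfloor>x * real M\<rfloor> \<le> M" by (simp add: nat_le_iff floor_le_iff)
    thus ?thesis by arith
  qed
  show ?thesis by (rule filterlim_at_top_mono[OF A]) (use B in \<open>auto intro!: always_eventually\<close>)
qed

lemma inv_M: "(\<lambda>M. 1 / real M) \<longlonglongrightarrow> 0" by (rule lim_inverse_n')

lemma par_sub:
  assumes K: "(\<lambda>M. real (K M) / real M) \<longlonglongrightarrow> y"
  shows "(\<lambda>M. Gs 1 \<epsilon> (K M) / real M ^ 3) \<longlonglongrightarrow> 2 * (1 - \<epsilon>) / 3 * y ^ 3"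
proof -
  let ?k = "\<lambda>M. real (K M) / real M" and ?i = "\<lambda>M. 1 / real M"
  have "(\<lambda>M. 2 * (1 - \<epsilon>) / 3 * ((?k M + ?i M) * ?k M * (?k M - ?i M)) + ?k M * ?i M * ?i M)
        \<longlonglongrightarrow> 2 * (1 - \<epsilon>) / 3 * ((y + 0) * y * (y - 0)) + y * 0 * 0"
    by (intro tendsto_intros K inv_M)
  moreover have "eventually (\<lambda>M. 2 * (1 - \<epsilon>) / 3 * ((?k M + ?i M) * ?k M * (?k M - ?i M)) + ?k M * ?i M * ?i M
        = Gs 1 \<epsilon> (K M) / real M ^ 3) sequentially"
    using eventually_gt_at_top[of 0]
    by eventually_elim (simp add: Gs_par field_simps power3_eq_cube)
  ultimately show ?thesis by (simp add: Lim_transform_eventually power3_eq_cube)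
qed

lemma par_lim:
  assumes K: "(\<lambda>M. real (K M) / real M) \<longlonglongrightarrow> y" and e: "\<epsilon> < 1"
  shows "(\<lambda>M. Gs 1 \<epsilon> (K M) / Gs 1 \<epsilon> M) \<longlonglongrightarrow> y ^ 3"
proof -
  have one: "(\<lambda>M. real M / real M) \<longlonglongrightarrow> 1"
    by (rule Lim_transform_eventually[OF tendsto_const]) (use eventually_gt_at_top[of 0] in \<open>eventually_elim, simp\<close>)
  have "(\<lambda>M. Gs 1 \<epsilon> (K M) / Gs 1 \<epsilon> M) \<longlonglongrightarrow> (2 * (1 - \<epsilon>) / 3 * y ^ 3) / (2 * (1 - \<epsilon>) / 3 * 1 ^ 3)"
    by (rule ratio_lim[OF par_sub[OF K] par_sub[OF one]]) (use e eventually_gt_at_top[of 0] in auto)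
  thus ?thesis using e by simp
qed

lemma hyp_lim:
  assumes c: "1 < c" and ec: "0 \<le> \<epsilon> * c" "\<epsilon> * c < 1"
    and KM: "\<And>M. K M \<le> M" and gap: "filterlim (\<lambda>M. M - K M) at_top sequentially"
  shows "(\<lambda>M. Gs c \<epsilon> (K M) / Gs c \<epsilon> M) \<longlonglongrightarrow> 0"
proof -
  interpret hyp c using c by unfold_locales
  let ?q = "1 / r\<^sup>2"
  let ?C = "2 / ((1 - 1 / r\<^sup>2) * (1 - \<epsilon> * c))"
  have rn: "r \<noteq> 0" using r_gt1 by linarith
  hence "0 < r\<^sup>2" by simp
  moreover note rn
  ultimately have q: "norm ?q < 1" using r2 by (simp add: divide_less_eq)
  have "(\<lambda>M. ?q ^ (M - K M)) \<longlonglongrightarrow> 0"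
    by (rule filterlim_compose[OF LIMSEQ_power_zero[OF q] gap])
  hence lim: "(\<lambda>M. ?C * ?q ^ (M - K M)) \<longlonglongrightarrow> 0"
    using tendsto_mult_right_zero by blast
  show ?thesis
  proof (rule tendsto_sandwich[OF _ _ tendsto_const lim])
    show "eventually (\<lambda>M. 0 \<le> Gs c \<epsilon> (K M) / Gs c \<epsilon> M) sequentially"
      using ec by (intro always_eventually allI divide_nonneg_nonneg Gs_nonneg) auto
    show "eventually (\<lambda>M. Gs c \<epsilon> (K M) / Gs c \<epsilon> M \<le> ?C * ?q ^ (M - K M)) sequentially"
      using eventually_gt_at_top[of 0]
      by eventually_elim (rule ratio_bound[OF ec KM], simp)
  qed
qed

definition phi :: "real \<Rightarrow> real" where
  "phi u = (if u = 0 then 1 / 6 else (u - sin u) / u ^ 3)"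

lemma phi_eq: "u - sin u = u ^ 3 * phi u"
  unfolding phi_def by simp

lemma phi_cont: "isCont phi 0"
proof -
  have "((\<lambda>u::real. (u - sin u) / u ^ 3) \<longlongrightarrow> 1 / 6) (at 0)" by real_asymp
  hence "(phi \<longlongrightarrow> 1 / 6) (at 0)"
    by (subst LIM_equal[of _ _ "\<lambda>u. (u - sin u) / u ^ 3"]) (auto simp: phi_def)
  thus ?thesis unfolding isCont_def by (simp add: phi_def)
qed

lemma theta_at0:
  fixes \<theta> :: "nat \<Rightarrow> real"
  assumes th: "eventually (\<lambda>M. 0 < \<theta> M) sequentially"
    and lim: "(\<lambda>M. real M * \<theta> M) \<longlonglongrightarrow> L"
  shows "filterlim \<theta> (at 0) sequentially"
proof (rule filterlim_atI)
  have "(\<lambda>M. (real M * \<theta> M) * (1 / real M)) \<longlonglongrightarrow> L * 0"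
    by (intro tendsto_intros lim inv_M)
  moreover have "eventually (\<lambda>M. (real M * \<theta> M) * (1 / real M) = \<theta> M) sequentially"
    using eventually_gt_at_top[of 0] by eventually_elim simp
  ultimately show "\<theta> \<longlonglongrightarrow> 0" using Lim_transform_eventually by fastforce
  show "eventually (\<lambda>M. \<theta> M \<noteq> 0) sequentially" using th by eventually_elim simp
qed

lemma sinc_lim: fixes \<theta> :: "nat \<Rightarrow> real" shows "filterlim \<theta> (at 0) sequentially \<Longrightarrow> (\<lambda>M. sin (\<theta> M) / \<theta> M) \<longlonglongrightarrow> 1"
proof -
  assume f: "filterlim \<theta> (at 0) sequentially"
  have "((\<lambda>x::real. sin x / x) \<longlongrightarrow> 1) (at 0)" by real_asymp
  from filterlim_compose[OF this f] show ?thesis .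
qed

lemma P_lim: fixes \<theta> :: "nat \<Rightarrow> real" shows "filterlim \<theta> (at 0) sequentially \<Longrightarrow> (\<lambda>M. (sin (\<theta> M) - \<theta> M * cos (\<theta> M)) / \<theta> M ^ 3) \<longlonglongrightarrow> 1 / 3"
proof -
  assume f: "filterlim \<theta> (at 0) sequentially"
  have "((\<lambda>x::real. (sin x - x * cos x) / x ^ 3) \<longlongrightarrow> 1 / 3) (at 0)" by real_asymp
  from filterlim_compose[OF this f] show ?thesis .
qed

lemma cos_lim: fixes \<theta> :: "nat \<Rightarrow> real" shows "filterlim \<theta> (at 0) sequentially \<Longrightarrow> (\<lambda>M. cos (\<theta> M)) \<longlonglongrightarrow> 1"
proof -
  assume f: "filterlim \<theta> (at 0) sequentially"
  hence "\<theta> \<longlonglongrightarrow> 0" by (simp add: filterlim_at)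
  from tendsto_cos[OF this] show ?thesis by simp
qed

lemma ell_iv_sub:
  fixes \<theta> :: "nat \<Rightarrow> real" and K :: "nat \<Rightarrow> nat"
  assumes e: "0 < \<epsilon>" "\<epsilon> < 1"
    and th: "eventually (\<lambda>M. 0 < \<theta> M \<and> \<theta> M \<le> pi / 2) sequentially"
    and big: "filterlim (\<lambda>M. real M * \<theta> M) at_top sequentially"
    and K: "(\<lambda>M. real (K M) / real M) \<longlonglongrightarrow> y"
  shows "(\<lambda>M. Hs (\<theta> M) \<epsilon> (K M) / (real M * (1 - \<epsilon> * (cos (\<theta> M))\<^sup>2))) \<longlonglongrightarrow> y"
proof -
  define D where "D M = 1 - \<epsilon> * (cos (\<theta> M))\<^sup>2" for M
  define err where "err M = (1 - \<epsilon>) * cos (\<theta> M) * sin (2 * real (K M) * \<theta> M) / (2 * sin (\<theta> M)) / (real M * D M)" for M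
  have D1: "1 - \<epsilon> \<le> D M" for M
  proof -
    have "(cos (\<theta> M))\<^sup>2 \<le> 1" using sin_cos_squared_add[of "\<theta> M"] zero_le_power2[of "sin (\<theta> M)"] by linarith
    hence "\<epsilon> * (cos (\<theta> M))\<^sup>2 \<le> \<epsilon>" using e by (simp add: mult_left_le)
    thus ?thesis unfolding D_def by simp
  qed
  have inv: "(\<lambda>M. inverse (real M * \<theta> M)) \<longlonglongrightarrow> 0" by (rule tendsto_inverse_0_at_top[OF big])
  have errb: "eventually (\<lambda>M. norm (err M) \<le> 3 / (2 * (1 - \<epsilon>)) * inverse (real M * \<theta> M)) sequentially"
    using th eventually_gt_at_top[of 0]
  proof eventually_elim
    case (elim M)
    have t: "0 < \<theta> M" "\<theta> M \<le> 2" using elim pi_less_4 by auto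
    have s3: "\<theta> M / 3 \<le> sin (\<theta> M)" using sin_lower[of "\<theta> M"] t by simp
    have num: "\<bar>(1 - \<epsilon>) * cos (\<theta> M) * sin (2 * real (K M) * \<theta> M)\<bar> \<le> 1"
    proof -
      have "\<bar>(1 - \<epsilon>) * cos (\<theta> M) * sin (2 * real (K M) * \<theta> M)\<bar>
          = \<bar>1 - \<epsilon>\<bar> * \<bar>cos (\<theta> M)\<bar> * \<bar>sin (2 * real (K M) * \<theta> M)\<bar>" by (simp add: abs_mult)
      also have "\<dots> \<le> 1 * 1 * 1" using e
        by (intro mult_mono) (auto simp: abs_cos_le_one abs_sin_le_one)
      finally show ?thesis by simp
    qed
    have low: "2 * (1 - \<epsilon>) / 3 * (real M * \<theta> M) \<le> 2 * sin (\<theta> M) * (real M * D M)"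
    proof -
      have "2 * (1 - \<epsilon>) / 3 * (real M * \<theta> M) = (2 * (\<theta> M / 3)) * (real M * (1 - \<epsilon>))" by (simp add: algebra_simps)
      also have "\<dots> \<le> (2 * sin (\<theta> M)) * (real M * D M)"
        using s3 D1[of M] e t elim by (intro mult_mono) auto
      finally show ?thesis .
    qed
    have lp: "0 < 2 * (1 - \<epsilon>) / 3 * (real M * \<theta> M)" using e t elim by simp
    have "norm (err M) = \<bar>(1 - \<epsilon>) * cos (\<theta> M) * sin (2 * real (K M) * \<theta> M)\<bar> / (2 * sin (\<theta> M) * (real M * D M))"
    proof -
      have sp: "0 < sin (\<theta> M)" using s3 t by linarith
      have Dp: "0 < D M" using D1[of M] e by linarith
      show ?thesis unfolding err_def using sp Dp by (simp add: abs_mult abs_divide)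
    qed
    also have "\<dots> \<le> 1 / (2 * (1 - \<epsilon>) / 3 * (real M * \<theta> M))"
      by (rule frac_le) (use num lp low in auto)
    also have "\<dots> = 3 / (2 * (1 - \<epsilon>)) * inverse (real M * \<theta> M)" by (simp add: field_simps)
    finally show ?case .
  qed
  have "err \<longlonglongrightarrow> 0"
    by (rule Lim_null_comparison[OF errb]) (rule tendsto_mult_right_zero[OF inv])
  hence "(\<lambda>M. real (K M) / real M - err M) \<longlonglongrightarrow> y - 0" by (intro tendsto_diff K)
  moreover have "eventually (\<lambda>M. real (K M) / real M - err M = Hs (\<theta> M) \<epsilon> (K M) / (real M * D M)) sequentially"
    using eventually_gt_at_top[of 0] th
  proof eventually_elim
    case (elim M)
    have "0 < sin (\<theta> M)" by (rule sin_gt_zero) (use elim pi_gt_zero in auto)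
    moreover have "0 < D M" using D1[of M] e by linarith
    ultimately show ?case unfolding err_def Hs_def D_def[symmetric] using elim by (simp add: field_simps)
  qed
  ultimately show ?thesis unfolding D_def using Lim_transform_eventually by fastforce
qed

lemma ell_iv:
  fixes \<theta> :: "nat \<Rightarrow> real" and K :: "nat \<Rightarrow> nat"
  assumes e: "0 < \<epsilon>" "\<epsilon> < 1"
    and th: "eventually (\<lambda>M. 0 < \<theta> M \<and> \<theta> M \<le> pi / 2) sequentially"
    and big: "filterlim (\<lambda>M. real M * \<theta> M) at_top sequentially"
    and K: "(\<lambda>M. real (K M) / real M) \<longlonglongrightarrow> y"
  shows "(\<lambda>M. Hs (\<theta> M) \<epsilon> (K M) / Hs (\<theta> M) \<epsilon> M) \<longlonglongrightarrow> y"
proof -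
  have one: "(\<lambda>M. real M / real M) \<longlonglongrightarrow> 1"
    by (rule Lim_transform_eventually[OF tendsto_const]) (use eventually_gt_at_top[of 0] in \<open>eventually_elim, simp\<close>)
  have "(\<lambda>M. Hs (\<theta> M) \<epsilon> (K M) / Hs (\<theta> M) \<epsilon> M) \<longlonglongrightarrow> y / 1"
  proof (rule ratio_lim[OF ell_iv_sub[OF e th big K] ell_iv_sub[OF e th big one]])
    show "eventually (\<lambda>M. real M * (1 - \<epsilon> * (cos (\<theta> M))\<^sup>2) \<noteq> 0) sequentially"
      using eventually_gt_at_top[of 0]
    proof eventually_elim
      case (elim M)
      have "(cos (\<theta> M))\<^sup>2 \<le> 1" using sin_cos_squared_add[of "\<theta> M"] zero_le_power2[of "sin (\<theta> M)"] by linarith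
      hence "\<epsilon> * (cos (\<theta> M))\<^sup>2 \<le> \<epsilon> * 1" using e by (intro mult_left_mono) auto
      hence "1 - \<epsilon> * (cos (\<theta> M))\<^sup>2 > 0" using e by linarith
      thus ?case using elim by simp
    qed
  qed simp
  thus ?thesis by simp
qed

lemma one_lim: "(\<lambda>M. real M / real M) \<longlonglongrightarrow> 1"
  by (rule Lim_transform_eventually[OF tendsto_const]) (use eventually_gt_at_top[of 0] in \<open>eventually_elim, simp\<close>)

lemma ell_iii_sub:
  fixes \<theta> :: "nat \<Rightarrow> real" and K :: "nat \<Rightarrow> nat"
  assumes th: "eventually (\<lambda>M. 0 < \<theta> M \<and> \<theta> M \<le> pi / 2) sequentially"
    and lim: "(\<lambda>M. real M * \<theta> M) \<longlonglongrightarrow> ts" and ts: "0 < ts"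
    and K: "(\<lambda>M. real (K M) / real M) \<longlonglongrightarrow> y"
  shows "(\<lambda>M. Hs (\<theta> M) \<epsilon> (K M) / real M) \<longlonglongrightarrow> (1 - \<epsilon>) * (y - sin (2 * y * ts) / (2 * ts))"
proof -
  have th0: "eventually (\<lambda>M. 0 < \<theta> M) sequentially" using th by eventually_elim simp
  have f: "filterlim \<theta> (at 0) sequentially" by (rule theta_at0[OF th0 lim])
  note c = cos_lim[OF f] and s = sinc_lim[OF f]
  have "(\<lambda>M. real (K M) / real M * (1 - \<epsilon> * (cos (\<theta> M))\<^sup>2)
          - (1 - \<epsilon>) * cos (\<theta> M) * sin (2 * (real (K M) / real M) * (real M * \<theta> M))
            / (2 * (real M * \<theta> M) * (sin (\<theta> M) / \<theta> M)))
        \<longlonglongrightarrow> y * (1 - \<epsilon> * 1\<^sup>2) - (1 - \<epsilon>) * 1 * sin (2 * y * ts) / (2 * ts * 1)"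
    using ts by (intro tendsto_intros K c s lim) auto
  moreover have "eventually (\<lambda>M. real (K M) / real M * (1 - \<epsilon> * (cos (\<theta> M))\<^sup>2)
          - (1 - \<epsilon>) * cos (\<theta> M) * sin (2 * (real (K M) / real M) * (real M * \<theta> M))
            / (2 * (real M * \<theta> M) * (sin (\<theta> M) / \<theta> M)) = Hs (\<theta> M) \<epsilon> (K M) / real M) sequentially"
    using eventually_gt_at_top[of 0] th
  proof eventually_elim
    case (elim M)
    have "0 < sin (\<theta> M)" by (rule sin_gt_zero) (use elim pi_gt_zero in auto)
    then show ?case using elim unfolding Hs_def by (simp add: field_simps)
  qed
  ultimately have "(\<lambda>M. Hs (\<theta> M) \<epsilon> (K M) / real M) \<longlonglongrightarrow> y * (1 - \<epsilon> * 1\<^sup>2) - (1 - \<epsilon>) * 1 * sin (2 * y * ts) / (2 * ts * 1)"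
    using Lim_transform_eventually by fastforce
  thus ?thesis by (simp add: algebra_simps)
qed

lemma ell_iii:
  fixes \<theta> :: "nat \<Rightarrow> real" and K :: "nat \<Rightarrow> nat"
  assumes e: "\<epsilon> < 1"
    and th: "eventually (\<lambda>M. 0 < \<theta> M \<and> \<theta> M \<le> pi / 2) sequentially"
    and lim: "(\<lambda>M. real M * \<theta> M) \<longlonglongrightarrow> ts" and ts: "0 < ts"
    and K: "(\<lambda>M. real (K M) / real M) \<longlonglongrightarrow> y"
  shows "(\<lambda>M. Hs (\<theta> M) \<epsilon> (K M) / Hs (\<theta> M) \<epsilon> M) \<longlonglongrightarrow>
           (y - sin (2 * y * ts) / (2 * ts)) / (1 - sin (2 * ts) / (2 * ts))"
proof -
  have B: "1 - sin (2 * ts) / (2 * ts) \<noteq> 0"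
    using sin_less[of "2 * ts"] ts by (simp add: field_simps)
  have "(\<lambda>M. Hs (\<theta> M) \<epsilon> (K M) / Hs (\<theta> M) \<epsilon> M) \<longlonglongrightarrow>
     ((1 - \<epsilon>) * (y - sin (2 * y * ts) / (2 * ts))) / ((1 - \<epsilon>) * (1 - sin (2 * 1 * ts) / (2 * ts)))"
    by (rule ratio_lim[OF ell_iii_sub[OF th lim ts K] ell_iii_sub[OF th lim ts one_lim]])
       (use B e eventually_gt_at_top[of 0] in auto)
  thus ?thesis using e by simp
qed

lemma ell_ii_sub:
  fixes \<theta> :: "nat \<Rightarrow> real" and K :: "nat \<Rightarrow> nat"
  assumes th: "eventually (\<lambda>M. 0 < \<theta> M \<and> \<theta> M \<le> pi / 2) sequentially"
    and lim: "(\<lambda>M. real M * \<theta> M) \<longlonglongrightarrow> 0"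
    and K: "(\<lambda>M. real (K M) / real M) \<longlonglongrightarrow> y"
  shows "(\<lambda>M. Hs (\<theta> M) \<epsilon> (K M) / ((real M * \<theta> M) ^ 3 / (2 * sin (\<theta> M)))) \<longlonglongrightarrow> (1 - \<epsilon>) * 8 * y ^ 3 / 6"
proof -
  have th0: "eventually (\<lambda>M. 0 < \<theta> M) sequentially" using th by eventually_elim simp
  have f: "filterlim \<theta> (at 0) sequentially" by (rule theta_at0[OF th0 lim])
  note c = cos_lim[OF f] and s = sinc_lim[OF f] and P = P_lim[OF f]
  have u: "(\<lambda>M. 2 * (real (K M) / real M) * (real M * \<theta> M)) \<longlonglongrightarrow> 0"
    using tendsto_mult[OF tendsto_mult[OF tendsto_const K] lim, of 2] by simp
  have ph: "(\<lambda>M. phi (2 * (real (K M) / real M) * (real M * \<theta> M))) \<longlonglongrightarrow> phi 0"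
    by (rule isCont_tendsto_compose[OF phi_cont u])
  let ?T = "\<lambda>M. 2 * (1 - \<epsilon>) * (real (K M) / real M) * (1 / real M)\<^sup>2 * ((sin (\<theta> M) - \<theta> M * cos (\<theta> M)) / \<theta> M ^ 3)
     + (1 - \<epsilon>) * cos (\<theta> M) * 8 * (real (K M) / real M) ^ 3 * phi (2 * (real (K M) / real M) * (real M * \<theta> M))
     + 2 * \<epsilon> * (real (K M) / real M) * (1 / real M)\<^sup>2 * (sin (\<theta> M) / \<theta> M) ^ 3"
  have "?T \<longlonglongrightarrow> 2 * (1 - \<epsilon>) * y * 0\<^sup>2 * (1 / 3) + (1 - \<epsilon>) * 1 * 8 * y ^ 3 * phi 0 + 2 * \<epsilon> * y * 0\<^sup>2 * 1 ^ 3"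
    by (intro tendsto_intros K c s P ph inv_M)
  moreover have "eventually (\<lambda>M. ?T M = Hs (\<theta> M) \<epsilon> (K M) / ((real M * \<theta> M) ^ 3 / (2 * sin (\<theta> M)))) sequentially"
    using eventually_gt_at_top[of 0] th
  proof eventually_elim
    case (elim M)
    define t where "t = \<theta> M"
    define k where "k = real (K M)"
    define m where "m = real M"
    have t0: "0 < t" and m0: "0 < m" using elim unfolding t_def m_def by auto
    have st: "0 < sin t" unfolding t_def by (rule sin_gt_zero) (use elim pi_gt_zero in auto)
    have pe: "2 * k * t - sin (2 * k * t) = (2 * k * t) ^ 3 * phi (2 * k * t)" by (rule phi_eq)
    have c2: "(cos t)\<^sup>2 = 1 - (sin t)\<^sup>2" by (simp add: cos_squared_eq)
    have I1: "Hs t \<epsilon> (K M) * (2 * sin t) = 2 * (1 - \<epsilon>) * k * (sin t - t * cos t)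
              + (1 - \<epsilon>) * cos t * ((2 * k * t) ^ 3 * phi (2 * k * t)) + 2 * \<epsilon> * k * (sin t) ^ 3"
    proof -
      have "Hs t \<epsilon> (K M) * (2 * sin t) = 2 * k * sin t * (1 - \<epsilon> * (cos t)\<^sup>2) - (1 - \<epsilon>) * cos t * sin (2 * k * t)"
        unfolding Hs_def k_def using st by (simp add: field_simps)
      also have "\<dots> = 2 * (1 - \<epsilon>) * k * (sin t - t * cos t)
              + (1 - \<epsilon>) * cos t * (2 * k * t - sin (2 * k * t)) + 2 * \<epsilon> * k * (sin t) ^ 3"
        unfolding c2 by (simp add: algebra_simps power2_eq_square power3_eq_cube)
      finally show ?thesis unfolding pe .
    qed
    have "Hs t \<epsilon> (K M) / ((m * t) ^ 3 / (2 * sin t)) = Hs t \<epsilon> (K M) * (2 * sin t) / (m * t) ^ 3"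
      using st by simp
    also have "\<dots> = 2 * (1 - \<epsilon>) * (k / m) * (1 / m)\<^sup>2 * ((sin t - t * cos t) / t ^ 3)
     + (1 - \<epsilon>) * cos t * 8 * (k / m) ^ 3 * phi (2 * (k / m) * (m * t))
     + 2 * \<epsilon> * (k / m) * (1 / m)\<^sup>2 * (sin t / t) ^ 3"
    proof -
      have "2 * (k / m) * (m * t) = 2 * k * t" using m0 by simp
      thus ?thesis unfolding I1 using t0 m0
        by (simp add: field_simps power2_eq_square power3_eq_cube)
    qed
    finally show ?case unfolding t_def k_def m_def by simp
  qed
  ultimately have "(\<lambda>M. Hs (\<theta> M) \<epsilon> (K M) / ((real M * \<theta> M) ^ 3 / (2 * sin (\<theta> M))))
     \<longlonglongrightarrow> 2 * (1 - \<epsilon>) * y * 0\<^sup>2 * (1 / 3) + (1 - \<epsilon>) * 1 * 8 * y ^ 3 * phi 0 + 2 * \<epsilon> * y * 0\<^sup>2 * 1 ^ 3"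
    using Lim_transform_eventually by fastforce
  thus ?thesis by (simp add: phi_def)
qed

lemma ell_ii:
  fixes \<theta> :: "nat \<Rightarrow> real" and K :: "nat \<Rightarrow> nat"
  assumes e: "\<epsilon> < 1"
    and th: "eventually (\<lambda>M. 0 < \<theta> M \<and> \<theta> M \<le> pi / 2) sequentially"
    and lim: "(\<lambda>M. real M * \<theta> M) \<longlonglongrightarrow> 0"
    and K: "(\<lambda>M. real (K M) / real M) \<longlonglongrightarrow> y"
  shows "(\<lambda>M. Hs (\<theta> M) \<epsilon> (K M) / Hs (\<theta> M) \<epsilon> M) \<longlonglongrightarrow> y ^ 3"
proof -
  have "(\<lambda>M. Hs (\<theta> M) \<epsilon> (K M) / Hs (\<theta> M) \<epsilon> M) \<longlonglongrightarrow> ((1 - \<epsilon>) * 8 * y ^ 3 / 6) / ((1 - \<epsilon>) * 8 * 1 ^ 3 / 6)"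
  proof (rule ratio_lim[OF ell_ii_sub[OF th lim K] ell_ii_sub[OF th lim one_lim]])
    show "eventually (\<lambda>M. (real M * \<theta> M) ^ 3 / (2 * sin (\<theta> M)) \<noteq> 0) sequentially"
      using eventually_gt_at_top[of 0] th
    proof eventually_elim
      case (elim M)
      have "0 < sin (\<theta> M)" by (rule sin_gt_zero) (use elim pi_gt_zero in auto)
      thus ?case using elim by simp
    qed
  qed (use e in simp)
  thus ?thesis using e by simp
qed

context coin begin

lemma kap_abs: "\<bar>kap \<xi>\<bar> = \<bar>cos (omega_of a b c d \<xi>)\<bar> / cmod a"
  unfolding kap_def om_eq rho_def by (simp add: abs_divide)

lemma theta_eq:
  assumes "\<bar>cos (omega_of a b c d \<xi>)\<bar> < cmod a"
  shows "theta_of a (omega_of a b c d \<xi>) = arccos \<bar>kap \<xi>\<bar>"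
proof -
  define q where "q = cos (omega_of a b c d \<xi>) / cmod a"
  have aq: "\<bar>kap \<xi>\<bar> = \<bar>q\<bar>" unfolding q_def kap_abs by (simp add: abs_divide)
  have q1: "\<bar>q\<bar> < 1" using assms a_nz unfolding q_def by (simp add: abs_divide)
  show ?thesis
  proof (cases "q > 0")
    case True
    then show ?thesis unfolding theta_of_def q_def[symmetric] aq by simp
  next
    case False
    hence "\<bar>q\<bar> = - q" by simp
    moreover have "arccos (- q) = pi - arccos q" by (rule arccos_minus) (use q1 in auto)
    ultimately show ?thesis unfolding theta_of_def q_def[symmetric] aq using False by simp
  qed
qed

lemma theta_props:
  assumes "\<bar>kap \<xi>\<bar> < 1"
  shows "0 < arccos \<bar>kap \<xi>\<bar>" "arccos \<bar>kap \<xi>\<bar> \<le> pi / 2"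
    "cos (arccos \<bar>kap \<xi>\<bar>) = \<bar>kap \<xi>\<bar>" "sin (arccos \<bar>kap \<xi>\<bar>) \<noteq> 0"
proof -
  have b: "0 < arccos \<bar>kap \<xi>\<bar> \<and> arccos \<bar>kap \<xi>\<bar> < pi"
    by (rule arccos_lt_bounded) (use assms in auto)
  thus "0 < arccos \<bar>kap \<xi>\<bar>" by simp
  have "arccos \<bar>kap \<xi>\<bar> \<le> arccos 0" by (rule arccos_le_arccos) (use assms in auto)
  thus "arccos \<bar>kap \<xi>\<bar> \<le> pi / 2" by simp
  show "cos (arccos \<bar>kap \<xi>\<bar>) = \<bar>kap \<xi>\<bar>" using assms by simp
  have "0 < sin (arccos \<bar>kap \<xi>\<bar>)" using b by (intro sin_gt_zero) auto
  thus "sin (arccos \<bar>kap \<xi>\<bar>) \<noteq> 0" by simp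
qed

lemma ratio_ell:
  assumes "\<bar>kap \<xi>\<bar> < 1"
  shows "Gs \<bar>kap \<xi>\<bar> \<epsilon> K / Gs \<bar>kap \<xi>\<bar> \<epsilon> M = Hs (arccos \<bar>kap \<xi>\<bar>) \<epsilon> K / Hs (arccos \<bar>kap \<xi>\<bar>) \<epsilon> M"
proof -
  let ?t = "arccos \<bar>kap \<xi>\<bar>"
  note tp = theta_props[OF assms]
  have "Gs \<bar>kap \<xi>\<bar> \<epsilon> N = Hs ?t \<epsilon> N / (sin ?t)\<^sup>2" for N
    using Gs_ell[OF tp(4), of \<epsilon> N] tp(4) unfolding tp(3) by (simp add: field_simps)
  thus ?thesis using tp(4) by simp
qed

lemma weak_conv_from:
  fixes \<xi> :: "nat \<Rightarrow> real" and Lim :: "real measure" and L :: "real \<Rightarrow> real"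
  assumes lim: "\<And>x. 0 \<le> x \<Longrightarrow> x < 1 \<Longrightarrow>
      (\<lambda>M. Gs \<bar>kap (\<xi> M)\<bar> (rho\<^sup>2) (M - nat \<lfloor>x * real M\<rfloor> - 1) / Gs \<bar>kap (\<xi> M)\<bar> (rho\<^sup>2) M) \<longlonglongrightarrow> L x"
    and cdfL: "\<And>x. cdf Lim x = (if x < 0 then 0 else if 1 \<le> x then 1 else 1 - L x)"
  shows "weak_conv_m (\<lambda>M. scaled_law a b c d M (\<xi> M)) Lim"
  unfolding weak_conv_m_def weak_conv_def
proof (intro allI impI)
  fix x :: real
  let ?s = "\<lambda>M. (if x < 0 then 0 else if 1 \<le> x then 1
     else 1 - Gs \<bar>kap (\<xi> M)\<bar> (rho\<^sup>2) (M - nat \<lfloor>x * real M\<rfloor> - 1) / Gs \<bar>kap (\<xi> M)\<bar> (rho\<^sup>2) M)"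
  have "?s \<longlonglongrightarrow> cdf Lim x"
  proof (cases "x < 0 \<or> 1 \<le> x")
    case True
    then show ?thesis unfolding cdfL by auto
  next
    case False
    hence x: "0 \<le> x" "x < 1" by auto
    have "(\<lambda>M. 1 - Gs \<bar>kap (\<xi> M)\<bar> (rho\<^sup>2) (M - nat \<lfloor>x * real M\<rfloor> - 1) / Gs \<bar>kap (\<xi> M)\<bar> (rho\<^sup>2) M)
          \<longlonglongrightarrow> 1 - L x" by (intro tendsto_diff tendsto_const lim x)
    then show ?thesis unfolding cdfL using x by simp
  qed
  moreover have "eventually (\<lambda>M. ?s M = cdf (scaled_law a b c d M (\<xi> M)) x) sequentially"
    using eventually_gt_at_top[of 0] by eventually_elim (simp add: cdf_G)
  ultimately show "(\<lambda>M. cdf (scaled_law a b c d M (\<xi> M)) x) \<longlonglongrightarrow> cdf Lim x"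
    by (rule Lim_transform_eventually)
qed

end

lemma cdf_return0: "cdf (return borel (0::real)) x = (if 0 \<le> x then 1 else 0)"
  unfolding cdf_def by (simp add: measure_return indicator_def)

lemma cdf_par: "cdf (law_with_density (\<lambda>x. 3 * (1 - x)\<^sup>2)) x =
   (if x < 0 then 0 else if 1 \<le> x then 1 else 1 - (1 - x) ^ 3)"
proof -
  have "cdf (law_with_density (\<lambda>x. 3 * (1 - x)\<^sup>2)) x
      = (if x < 0 then 0 else (1 - (1 - min x 1) ^ 3) - (1 - (1 - 0) ^ 3))"
    by (rule cdf_dens) (auto intro!: derivative_eq_intros borel_measurable_continuous_onI continuous_intros
                         simp: power2_eq_square)
  thus ?thesis by auto
qed

lemma cdf_unif: "cdf (law_with_density (\<lambda>x. 1)) x = (if x < 0 then 0 else if 1 \<le> x then 1 else 1 - (1 - x))"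
proof -
  have "cdf (law_with_density (\<lambda>x. 1)) x = (if x < 0 then 0 else min x 1 - 0)"
    by (rule cdf_dens) (auto intro!: derivative_eq_intros)
  thus ?thesis by auto
qed

lemma alg_mid:
  fixes S T t ts :: real
  assumes "1 - S / (2 * ts) \<noteq> 0" "ts \<noteq> 0"
  shows "2 / (1 - S / (2 * ts)) * (t / 2 + T / (4 * ts)) - 2 / (1 - S / (2 * ts)) * (0 / 2 + S / (4 * ts))
       = 1 - ((1 - t) - T / (2 * ts)) / (1 - S / (2 * ts))"
proof -
  define D where "D = 1 - S / (2 * ts)"
  have D: "D \<noteq> 0" using assms unfolding D_def by simp
  have "2 / D * (t / 2 + T / (4 * ts)) - 2 / D * (0 / 2 + S / (4 * ts)) = (t + (T - S) / (2 * ts)) / D"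
    using D assms(2) by (simp add: field_simps)
  also have "\<dots> = 1 - ((1 - t) - T / (2 * ts)) / D"
    using D assms(2) unfolding D_def by (simp add: field_simps)
  finally show ?thesis unfolding D_def .
qed

lemma cdf_mid:
  assumes ts: "0 < ts"
  shows "cdf (law_with_density (\<lambda>x. 2 / (1 - sin (2 * ts) / (2 * ts)) * (sin ((1 - x) * ts))\<^sup>2)) x =
   (if x < 0 then 0 else if 1 \<le> x then 1 else
      1 - ((1 - x) - sin (2 * (1 - x) * ts) / (2 * ts)) / (1 - sin (2 * ts) / (2 * ts)))"
proof -
  define C where "C = 2 / (1 - sin (2 * ts) / (2 * ts))"
  define F where "F t = C * (t / 2 + sin (2 * (1 - t) * ts) / (4 * ts))" for t
  have B: "1 - sin (2 * ts) / (2 * ts) > 0"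
    using sin_less[of "2 * ts"] ts by (simp add: field_simps)
  have C0: "0 \<le> C" unfolding C_def using B by simp
  have D: "DERIV F t :> C * (sin ((1 - t) * ts))\<^sup>2" for t
  proof -
    have "DERIV F t :> C * (1 / 2 + cos (2 * (1 - t) * ts) * (- 2 * ts) / (4 * ts))"
      unfolding F_def by (auto intro!: derivative_eq_intros simp: algebra_simps)
    moreover have "C * (1 / 2 + cos (2 * (1 - t) * ts) * (- 2 * ts) / (4 * ts)) = C * (sin ((1 - t) * ts))\<^sup>2"
    proof -
      define w where "w = (1 - t) * ts"
      have e: "2 * (1 - t) * ts = 2 * w" unfolding w_def by simp
      have "1 / 2 + cos (2 * w) * (- 2 * ts) / (4 * ts) = (sin w)\<^sup>2"
        unfolding cos_double_sin using ts by (simp add: field_simps)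
      thus ?thesis unfolding e w_def[symmetric] by simp
    qed
    ultimately show ?thesis by (rule DERIV_cong)
  qed
  have "cdf (law_with_density (\<lambda>x. C * (sin ((1 - x) * ts))\<^sup>2)) x = (if x < 0 then 0 else F (min x 1) - F 0)"
    by (rule cdf_dens) (use D C0 in \<open>auto intro!: borel_measurable_continuous_onI continuous_intros\<close>)
  moreover have "F t - F 0 = 1 - ((1 - t) - sin (2 * (1 - t) * ts) / (2 * ts)) / (1 - sin (2 * ts) / (2 * ts))" for t
    unfolding F_def C_def using alg_mid[of "sin (2 * ts)" ts t "sin (2 * (1 - t) * ts)"] B ts by simp
  ultimately show ?thesis unfolding C_def
    by (cases "x < 0"; cases "1 \<le> x") (auto simp: min_def)
qed

context coin begin

lemma kap_lt1: "\<bar>cos (omega_of a b c d \<xi>)\<bar> < cmod a \<Longrightarrow> \<bar>kap \<xi>\<bar> < 1"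
  unfolding kap_abs using a_nz by (simp add: divide_less_eq)

lemma eps_pos: "0 < rho\<^sup>2" using rho_pos by simp

lemma eps_lt1: "rho\<^sup>2 < 1"
  using power_strict_mono[of rho 1 2] rho_pos rho_lt1 by simp

lemma ell_common:
  fixes \<xi> :: "nat \<Rightarrow> real"
  assumes B: "\<forall>M\<ge>1. \<bar>cos (omega_of a b c d (\<xi> M))\<bar> < cmod a"
  defines "\<theta> \<equiv> \<lambda>M. arccos \<bar>kap (\<xi> M)\<bar>"
  shows "eventually (\<lambda>M. 0 < \<theta> M \<and> \<theta> M \<le> pi / 2) sequentially"
    and "eventually (\<lambda>M. theta_of a (omega_of a b c d (\<xi> M)) = \<theta> M) sequentially"
    and "\<And>K. eventually (\<lambda>M. Hs (\<theta> M) (rho\<^sup>2) (K M) / Hs (\<theta> M) (rho\<^sup>2) M =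
               Gs \<bar>kap (\<xi> M)\<bar> (rho\<^sup>2) (K M) / Gs \<bar>kap (\<xi> M)\<bar> (rho\<^sup>2) M) sequentially"
proof -
  have k: "eventually (\<lambda>M. \<bar>kap (\<xi> M)\<bar> < 1 \<and> \<bar>cos (omega_of a b c d (\<xi> M))\<bar> < cmod a) sequentially"
    using eventually_ge_at_top[of 1] by eventually_elim (use B kap_lt1 in auto)
  show "eventually (\<lambda>M. 0 < \<theta> M \<and> \<theta> M \<le> pi / 2) sequentially"
    using k by eventually_elim (use theta_props in \<open>auto simp: \<theta>_def\<close>)
  show "eventually (\<lambda>M. theta_of a (omega_of a b c d (\<xi> M)) = \<theta> M) sequentially"
    using k by eventually_elim (use theta_eq in \<open>auto simp: \<theta>_def\<close>)
  fix K :: "nat \<Rightarrow> nat"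
  show "eventually (\<lambda>M. Hs (\<theta> M) (rho\<^sup>2) (K M) / Hs (\<theta> M) (rho\<^sup>2) M =
               Gs \<bar>kap (\<xi> M)\<bar> (rho\<^sup>2) (K M) / Gs \<bar>kap (\<xi> M)\<bar> (rho\<^sup>2) M) sequentially"
    using k by eventually_elim (use ratio_ell in \<open>auto simp: \<theta>_def\<close>)
qed

end

lemma not_isCont_step: "\<not> isCont (\<lambda>x::real. if 0 \<le> x then 1 else (0::real)) 0"
proof
  define f where "f = (\<lambda>x::real. if 0 \<le> x then 1 else (0::real))"
  assume "isCont (\<lambda>x::real. if 0 \<le> x then 1 else (0::real)) 0"
  hence c: "isCont f 0" unfolding f_def .
  have g: "(\<lambda>n. - inverse (real (Suc n))) \<longlonglongrightarrow> 0"
    using tendsto_minus[OF LIMSEQ_inverse_real_of_nat] by simp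
  have "(\<lambda>n. f (- inverse (real (Suc n)))) \<longlonglongrightarrow> f 0" by (rule isCont_tendsto_compose[OF c g])
  moreover have "f (- inverse (real (Suc n))) = 0" for n
  proof -
    have "0 < inverse (real (Suc n))" by simp
    thus ?thesis unfolding f_def by simp
  qed
  ultimately have "(\<lambda>n. 0::real) \<longlonglongrightarrow> 1" unfolding f_def by simp
  thus False by (simp add: LIMSEQ_const_iff)
qed

theorem theorem3p1:
  fixes a b c d :: complex
  assumes unit: "unitary2 a b c d"
    and nz: "a * b * c * d \<noteq> 0"
  shows
    "(\<forall>\<xi>::real. \<bar>cos (omega_of a b c d \<xi>)\<bar> > cmod a \<longrightarrow>
        weak_conv_m (\<lambda>M. scaled_law a b c d M \<xi>) (return borel 0))
   \<and> (\<forall>\<xi>::real. \<bar>cos (omega_of a b c d \<xi>)\<bar> = cmod a \<longrightarrow>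
        weak_conv_m (\<lambda>M. scaled_law a b c d M \<xi>) (law_with_density (\<lambda>x. 3 * (1 - x)\<^sup>2)))
   \<and> (\<forall>\<xi>::nat \<Rightarrow> real.
        (\<forall>M\<ge>1. \<bar>cos (omega_of a b c d (\<xi> M))\<bar> < cmod a) \<and>
        (\<lambda>M. real M * theta_of a (omega_of a b c d (\<xi> M))) \<longlonglongrightarrow> 0 \<longrightarrow>
        weak_conv_m (\<lambda>M. scaled_law a b c d M (\<xi> M)) (law_with_density (\<lambda>x. 3 * (1 - x)\<^sup>2)))
   \<and> (\<forall>(\<xi>::nat \<Rightarrow> real) (\<theta>s::real).
        (\<forall>M\<ge>1. \<bar>cos (omega_of a b c d (\<xi> M))\<bar> < cmod a) \<and> 0 < \<theta>s \<and>
        (\<lambda>M. real M * theta_of a (omega_of a b c d (\<xi> M))) \<longlonglongrightarrow> \<theta>s \<longrightarrow>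
        weak_conv_m (\<lambda>M. scaled_law a b c d M (\<xi> M))
          (law_with_density (\<lambda>x. 2 / (1 - sin (2 * \<theta>s) / (2 * \<theta>s)) * (sin ((1 - x) * \<theta>s))\<^sup>2)))
   \<and> (\<forall>\<xi>::nat \<Rightarrow> real.
        (\<forall>M\<ge>1. \<bar>cos (omega_of a b c d (\<xi> M))\<bar> < cmod a) \<and>
        filterlim (\<lambda>M. real M * theta_of a (omega_of a b c d (\<xi> M))) at_top sequentially \<longrightarrow>
        weak_conv_m (\<lambda>M. scaled_law a b c d M (\<xi> M)) (law_with_density (\<lambda>x. 1)))"
proof -
  interpret coin a b c d using unit nz by unfold_locales
  let ?K = "\<lambda>x M. M - nat \<lfloor>x * real M\<rfloor> - 1"
  have e0: "0 < rho\<^sup>2" and e1: "rho\<^sup>2 < 1" using eps_pos eps_lt1 .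
  have P1: "weak_conv_m (\<lambda>M. scaled_law a b c d M \<xi>) (return borel 0)"
    if h: "\<bar>cos (omega_of a b c d \<xi>)\<bar> > cmod a" for \<xi>
    unfolding weak_conv_m_def weak_conv_def
  proof (intro allI impI)
    fix x :: real
    assume ic: "isCont (cdf (return borel 0)) x"
    have c1: "1 < \<bar>kap \<xi>\<bar>" unfolding kap_abs using h a_nz by (simp add: less_divide_eq)
    have ec: "0 \<le> rho\<^sup>2 * \<bar>kap \<xi>\<bar>" "rho\<^sup>2 * \<bar>kap \<xi>\<bar> < 1" using eps_c[of \<xi>] rho_lt1 by auto
    let ?s = "\<lambda>M. (if x < 0 then 0 else if 1 \<le> x then 1
       else 1 - Gs \<bar>kap \<xi>\<bar> (rho\<^sup>2) (?K x M) / Gs \<bar>kap \<xi>\<bar> (rho\<^sup>2) M)"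
    have ev: "eventually (\<lambda>M. ?s M = cdf (scaled_law a b c d M \<xi>) x) sequentially"
      using eventually_gt_at_top[of 0] by eventually_elim (simp add: cdf_G)
    have "?s \<longlonglongrightarrow> cdf (return borel 0) x"
    proof (cases "x < 0 \<or> 1 \<le> x")
      case True
      then show ?thesis unfolding cdf_return0 by auto
    next
      case False
      hence x: "0 \<le> x" "x < 1" by auto
      have "x \<noteq> 0"
      proof
        assume "x = 0"
        with ic have "isCont (\<lambda>x::real. if 0 \<le> x then 1 else (0::real)) 0"
          unfolding cdf_return0 by simp
        with not_isCont_step show False by blast
      qed
      hence xp: "0 < x" using x by simp
      have "(\<lambda>M. Gs \<bar>kap \<xi>\<bar> (rho\<^sup>2) (?K x M) / Gs \<bar>kap \<xi>\<bar> (rho\<^sup>2) M) \<longlonglongrightarrow> 0"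
        by (rule hyp_lim[OF c1 ec]) (use K_gap[OF xp x(2)] in auto)
      hence "(\<lambda>M. 1 - Gs \<bar>kap \<xi>\<bar> (rho\<^sup>2) (?K x M) / Gs \<bar>kap \<xi>\<bar> (rho\<^sup>2) M) \<longlonglongrightarrow> 1 - 0"
        by (intro tendsto_diff tendsto_const)
      then show ?thesis unfolding cdf_return0 using x by simp
    qed
    thus "(\<lambda>M. cdf (scaled_law a b c d M \<xi>) x) \<longlonglongrightarrow> cdf (return borel 0) x"
      using ev by (rule Lim_transform_eventually)
  qed
  have P2: "weak_conv_m (\<lambda>M. scaled_law a b c d M \<xi>) (law_with_density (\<lambda>x. 3 * (1 - x)\<^sup>2))"
    if h: "\<bar>cos (omega_of a b c d \<xi>)\<bar> = cmod a" for \<xi>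
  proof -
    have c1: "\<bar>kap \<xi>\<bar> = 1" unfolding kap_abs using h a_nz by simp
    show ?thesis
      using weak_conv_from[of "\<lambda>M. \<xi>" "\<lambda>x. (1 - x) ^ 3" "law_with_density (\<lambda>x. 3 * (1 - x)\<^sup>2)"]
        par_lim[OF K_lim e1] cdf_par unfolding c1 by simp
  qed
  have P3: "weak_conv_m (\<lambda>M. scaled_law a b c d M (\<xi> M)) (law_with_density (\<lambda>x. 3 * (1 - x)\<^sup>2))"
    if B: "\<forall>M\<ge>1. \<bar>cos (omega_of a b c d (\<xi> M))\<bar> < cmod a"
      and L: "(\<lambda>M. real M * theta_of a (omega_of a b c d (\<xi> M))) \<longlonglongrightarrow> 0" for \<xi>
  proof (rule weak_conv_from[of \<xi> "\<lambda>x. (1 - x) ^ 3"])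
    note ec = ell_common[OF B]
    let ?\<theta> = "\<lambda>M. arccos \<bar>kap (\<xi> M)\<bar>"
    have L': "(\<lambda>M. real M * ?\<theta> M) \<longlonglongrightarrow> 0"
      by (rule Lim_transform_eventually[OF L]) (use ec(2) in eventually_elim, simp)
    fix x :: real assume x: "0 \<le> x" "x < 1"
    show "(\<lambda>M. Gs \<bar>kap (\<xi> M)\<bar> (rho\<^sup>2) (?K x M) / Gs \<bar>kap (\<xi> M)\<bar> (rho\<^sup>2) M) \<longlonglongrightarrow> (1 - x) ^ 3"
      by (rule Lim_transform_eventually[OF ell_ii[OF e1 ec(1) L' K_lim[OF x]] ec(3)])
  next
    fix x show "cdf (law_with_density (\<lambda>x. 3 * (1 - x)\<^sup>2)) x = (if x < 0 then 0 else if 1 \<le> x then 1 else 1 - (1 - x) ^ 3)"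
      by (rule cdf_par)
  qed
  have P4: "weak_conv_m (\<lambda>M. scaled_law a b c d M (\<xi> M))
          (law_with_density (\<lambda>x. 2 / (1 - sin (2 * ts) / (2 * ts)) * (sin ((1 - x) * ts))\<^sup>2))"
    if B: "\<forall>M\<ge>1. \<bar>cos (omega_of a b c d (\<xi> M))\<bar> < cmod a" and ts: "0 < ts"
      and L: "(\<lambda>M. real M * theta_of a (omega_of a b c d (\<xi> M))) \<longlonglongrightarrow> ts" for \<xi> ts
  proof (rule weak_conv_from[of \<xi> "\<lambda>x. ((1 - x) - sin (2 * (1 - x) * ts) / (2 * ts)) / (1 - sin (2 * ts) / (2 * ts))"])
    note ec = ell_common[OF B]
    let ?\<theta> = "\<lambda>M. arccos \<bar>kap (\<xi> M)\<bar>"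
    have L': "(\<lambda>M. real M * ?\<theta> M) \<longlonglongrightarrow> ts"
      by (rule Lim_transform_eventually[OF L]) (use ec(2) in eventually_elim, simp)
    fix x :: real assume x: "0 \<le> x" "x < 1"
    show "(\<lambda>M. Gs \<bar>kap (\<xi> M)\<bar> (rho\<^sup>2) (?K x M) / Gs \<bar>kap (\<xi> M)\<bar> (rho\<^sup>2) M) \<longlonglongrightarrow>
           ((1 - x) - sin (2 * (1 - x) * ts) / (2 * ts)) / (1 - sin (2 * ts) / (2 * ts))"
      by (rule Lim_transform_eventually[OF ell_iii[OF e1 ec(1) L' ts K_lim[OF x]] ec(3)])
  next
    fix x show "cdf (law_with_density (\<lambda>x. 2 / (1 - sin (2 * ts) / (2 * ts)) * (sin ((1 - x) * ts))\<^sup>2)) x =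
       (if x < 0 then 0 else if 1 \<le> x then 1 else
         1 - ((1 - x) - sin (2 * (1 - x) * ts) / (2 * ts)) / (1 - sin (2 * ts) / (2 * ts)))"
      by (rule cdf_mid[OF ts])
  qed
  have P5: "weak_conv_m (\<lambda>M. scaled_law a b c d M (\<xi> M)) (law_with_density (\<lambda>x. 1))"
    if B: "\<forall>M\<ge>1. \<bar>cos (omega_of a b c d (\<xi> M))\<bar> < cmod a"
      and L: "filterlim (\<lambda>M. real M * theta_of a (omega_of a b c d (\<xi> M))) at_top sequentially" for \<xi>
  proof (rule weak_conv_from[of \<xi> "\<lambda>x. 1 - x"])
    note ec = ell_common[OF B]
    let ?\<theta> = "\<lambda>M. arccos \<bar>kap (\<xi> M)\<bar>"
    have L': "filterlim (\<lambda>M. real M * ?\<theta> M) at_top sequentially"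
      by (rule filterlim_cong[THEN iffD1, OF refl refl _ L]) (use ec(2) in eventually_elim, simp)
    fix x :: real assume x: "0 \<le> x" "x < 1"
    show "(\<lambda>M. Gs \<bar>kap (\<xi> M)\<bar> (rho\<^sup>2) (?K x M) / Gs \<bar>kap (\<xi> M)\<bar> (rho\<^sup>2) M) \<longlonglongrightarrow> 1 - x"
      by (rule Lim_transform_eventually[OF ell_iv[OF e0 e1 ec(1) L' K_lim[OF x]] ec(3)])
  next
    fix x show "cdf (law_with_density (\<lambda>x. 1)) x = (if x < 0 then 0 else if 1 \<le> x then 1 else 1 - (1 - x))"
      by (rule cdf_unif)
  qed
  show ?thesis using P1 P2 P3 P4 P5 by blast
qed

end
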